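(* Let $R$ be a local noetherian ring, $C$ a semidualizing $R$-module, and $M$ a finitely generated $R$-module admitting a bounded $\mathcal{P}_C^f$-resolution. Then $M$ admits a minimal $\mathcal{P}_C^f$-resolution.
   Context: An $R$-module $C$ over a noetherian ring $R$ is semidualizing if it is finitely generated, the homothety map $R\to\operatorname{Hom}_R(C,C)$ is an isomorphism, and $\operatorname{Ext}^i_R(C,C)=0$ for all $i\geq 1$. $\mathcal{P}_C^f$ is the class of modules $C\otimes_R P$ with $P$ finitely generated projective (over a local ring, the modules $C^n$). A $\mathcal{P}_C^f$-resolution of $M$ is a complex $X$ with $X_n=0$ for $n<0$, $\operatorname{H}_n(X)=0$ for $n>0$, $\operatorname{H}_0(X)\cong M$, and all $X_n\in\mathcal{P}_C^f$. A complex $B$ is minimal if every homotopy equivalence $B\to B$ is an isomorphism (equivalently, every chain map $B\to B$ homotopic to the identity is an isomorphism). *)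

theory Defs
  imports "HOL-Algebra.Module" "HOL-Algebra.Ring_Divisibility"
begin

definition lin_map :: "('a, 'r) ring_scheme \<Rightarrow> ('a, 'b, 'm1) module_scheme \<Rightarrow> ('a, 'c, 'm2) module_scheme
    \<Rightarrow> ('b \<Rightarrow> 'c) \<Rightarrow> bool" where
  "lin_map R M N f \<longleftrightarrow>
     f \<in> carrier M \<rightarrow> carrier N \<and>
     (\<forall>x\<in>carrier M. \<forall>y\<in>carrier M. f (x \<oplus>\<^bsub>M\<^esub> y) = f x \<oplus>\<^bsub>N\<^esub> f y) \<and>
     (\<forall>r\<in>carrier R. \<forall>x\<in>carrier M. f (r \<odot>\<^bsub>M\<^esub> x) = r \<odot>\<^bsub>N\<^esub> f x)"

definition fin_gen :: "('a, 'r) ring_scheme \<Rightarrow> ('a, 'b, 'm) module_scheme \<Rightarrow> bool" where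
  "fin_gen R M \<longleftrightarrow>
     (\<exists>S. finite S \<and> S \<subseteq> carrier M \<and>
        (\<forall>m\<in>carrier M. \<exists>c \<in> S \<rightarrow> carrier R. m = finsum M (\<lambda>s. c s \<odot>\<^bsub>M\<^esub> s) S))"

definition local_ring :: "('a, 'r) ring_scheme \<Rightarrow> bool" where
  "local_ring R \<longleftrightarrow> cring R \<and> (\<exists>!I. maximalideal I R)"

text \<open>The direct sum M^n, realised as functions nat => M vanishing from index n on.\<close>
definition pow_mod :: "('a, 'b, 'm) module_scheme \<Rightarrow> nat \<Rightarrow> ('a, nat \<Rightarrow> 'b) module" where
  "pow_mod M n =
     \<lparr>carrier = {f. (\<forall>i<n. f i \<in> carrier M) \<and> (\<forall>i. n \<le> i \<longrightarrow> f i = \<zero>\<^bsub>M\<^esub>)},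
      mult = (\<lambda>f g i. \<zero>\<^bsub>M\<^esub>),
      one = (\<lambda>i. \<zero>\<^bsub>M\<^esub>),
      zero = (\<lambda>i. \<zero>\<^bsub>M\<^esub>),
      add = (\<lambda>f g i. f i \<oplus>\<^bsub>M\<^esub> g i),
      smult = (\<lambda>r f i. r \<odot>\<^bsub>M\<^esub> f i)\<rparr>"

definition ring_mod :: "('a, 'r) ring_scheme \<Rightarrow> ('a, 'a) module" where
  "ring_mod R =
     \<lparr>carrier = carrier R, mult = mult R, one = one R, zero = zero R, add = add R,
      smult = mult R\<rparr>"

abbreviation free_mod :: "('a, 'r) ring_scheme \<Rightarrow> nat \<Rightarrow> ('a, nat \<Rightarrow> 'a) module" where
  "free_mod R n \<equiv> pow_mod (ring_mod R) n"

text \<open>An augmented complex  ... -> X_2 -d_2-> X_1 -d_1-> X_0 -e-> N -> 0  with X_k = P^(a k),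
  which is exact everywhere, i.e. a resolution of N (H_k = 0 for k > 0 and H_0 \<cong> N via e).\<close>
definition pow_resolution ::
  "('a, 'r) ring_scheme \<Rightarrow> ('a, 'b, 'm1) module_scheme \<Rightarrow> ('a, 'c, 'm2) module_scheme
     \<Rightarrow> (nat \<Rightarrow> nat) \<Rightarrow> (nat \<Rightarrow> (nat \<Rightarrow> 'b) \<Rightarrow> (nat \<Rightarrow> 'b)) \<Rightarrow> ((nat \<Rightarrow> 'b) \<Rightarrow> 'c) \<Rightarrow> bool" where
  "pow_resolution R P N a d e \<longleftrightarrow>
     (\<forall>n\<ge>1. lin_map R (pow_mod P (a n)) (pow_mod P (a (n - 1))) (d n)) \<and>
     (\<forall>n\<ge>1. {x \<in> carrier (pow_mod P (a n)). d n x = \<zero>\<^bsub>pow_mod P (a (n - 1))\<^esub>}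
               = d (Suc n) ` carrier (pow_mod P (a (Suc n)))) \<and>
     lin_map R (pow_mod P (a 0)) N e \<and>
     e ` carrier (pow_mod P (a 0)) = carrier N \<and>
     {x \<in> carrier (pow_mod P (a 0)). e x = \<zero>\<^bsub>N\<^esub>} = d 1 ` carrier (pow_mod P (a 1))"

text \<open>A P_C^f-resolution of M (over a local ring P_C^f consists of the modules C^n).\<close>
abbreviation PCf_resolution where
  "PCf_resolution R C M a d e \<equiv> pow_resolution R C M a d e"

abbreviation free_resolution where
  "free_resolution R C b d e \<equiv> pow_resolution R (ring_mod R) C b d e"

definition homothety_iso :: "('a, 'r) ring_scheme \<Rightarrow> ('a, 'c, 'm) module_scheme \<Rightarrow> bool" where
  "homothety_iso R C \<longleftrightarrow>
     (\<forall>f. lin_map R C C f \<longrightarrow>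
        (\<exists>!r. r \<in> carrier R \<and> (\<forall>c\<in>carrier C. f c = r \<odot>\<^bsub>C\<^esub> c)))"

text \<open>Ext^i_R(C,C) = 0 for all i >= 1, computed as the cohomology of Hom_R(F,C) for a
  (any) resolution F of C by finitely generated free modules:
  every phi in Hom(F_i,C) with phi o d_(i+1) = 0 is of the form psi o d_i.\<close>
definition ext_self_vanishing :: "('a, 'r) ring_scheme \<Rightarrow> ('a, 'c, 'm) module_scheme \<Rightarrow> bool" where
  "ext_self_vanishing R C \<longleftrightarrow>
     (\<forall>b d e. free_resolution R C b d e \<longrightarrow>
        (\<forall>i\<ge>1. \<forall>\<phi>. lin_map R (free_mod R (b i)) C \<phi> \<and>
                 (\<forall>x\<in>carrier (free_mod R (b (Suc i))). \<phi> (d (Suc i) x) = \<zero>\<^bsub>C\<^esub>) \<longrightarrow>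
              (\<exists>\<psi>. lin_map R (free_mod R (b (i - 1))) C \<psi> \<and>
                    (\<forall>x\<in>carrier (free_mod R (b i)). \<phi> x = \<psi> (d i x)))))"

definition semidualizing :: "('a, 'r) ring_scheme \<Rightarrow> ('a, 'c, 'm) module_scheme \<Rightarrow> bool" where
  "semidualizing R C \<longleftrightarrow>
     module R C \<and> fin_gen R C \<and> homothety_iso R C \<and> ext_self_vanishing R C"

definition bounded_cx :: "('a, 'c, 'm) module_scheme \<Rightarrow> (nat \<Rightarrow> nat) \<Rightarrow> bool" where
  "bounded_cx C a \<longleftrightarrow>
     (\<exists>N. \<forall>n\<ge>N. carrier (pow_mod C (a n)) = {\<zero>\<^bsub>pow_mod C (a n)\<^esub>})"

definition chain_endo ::
  "('a, 'r) ring_scheme \<Rightarrow> ('a, 'c, 'm) module_scheme \<Rightarrow> (nat \<Rightarrow> nat)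
     \<Rightarrow> (nat \<Rightarrow> (nat \<Rightarrow> 'c) \<Rightarrow> (nat \<Rightarrow> 'c)) \<Rightarrow> (nat \<Rightarrow> (nat \<Rightarrow> 'c) \<Rightarrow> (nat \<Rightarrow> 'c)) \<Rightarrow> bool" where
  "chain_endo R C a d \<phi> \<longleftrightarrow>
     (\<forall>n. lin_map R (pow_mod C (a n)) (pow_mod C (a n)) (\<phi> n)) \<and>
     (\<forall>n\<ge>1. \<forall>x\<in>carrier (pow_mod C (a n)). d n (\<phi> n x) = \<phi> (n - 1) (d n x))"

definition cx_homotopic ::
  "('a, 'r) ring_scheme \<Rightarrow> ('a, 'c, 'm) module_scheme \<Rightarrow> (nat \<Rightarrow> nat)
     \<Rightarrow> (nat \<Rightarrow> (nat \<Rightarrow> 'c) \<Rightarrow> (nat \<Rightarrow> 'c))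
     \<Rightarrow> (nat \<Rightarrow> (nat \<Rightarrow> 'c) \<Rightarrow> (nat \<Rightarrow> 'c)) \<Rightarrow> (nat \<Rightarrow> (nat \<Rightarrow> 'c) \<Rightarrow> (nat \<Rightarrow> 'c)) \<Rightarrow> bool" where
  "cx_homotopic R C a d \<phi> \<psi> \<longleftrightarrow>
     (\<exists>s. (\<forall>n. lin_map R (pow_mod C (a n)) (pow_mod C (a (Suc n))) (s n)) \<and>
          (\<forall>n. \<forall>x\<in>carrier (pow_mod C (a n)).
              \<phi> n x = \<psi> n x \<oplus>\<^bsub>pow_mod C (a n)\<^esub> d (Suc n) (s n x)
                        \<oplus>\<^bsub>pow_mod C (a n)\<^esub> (if n = 0 then \<zero>\<^bsub>pow_mod C (a n)\<^esub> else s (n - 1) (d n x))))"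

definition homotopy_equiv ::
  "('a, 'r) ring_scheme \<Rightarrow> ('a, 'c, 'm) module_scheme \<Rightarrow> (nat \<Rightarrow> nat)
     \<Rightarrow> (nat \<Rightarrow> (nat \<Rightarrow> 'c) \<Rightarrow> (nat \<Rightarrow> 'c)) \<Rightarrow> (nat \<Rightarrow> (nat \<Rightarrow> 'c) \<Rightarrow> (nat \<Rightarrow> 'c)) \<Rightarrow> bool" where
  "homotopy_equiv R C a d \<phi> \<longleftrightarrow>
     chain_endo R C a d \<phi> \<and>
     (\<exists>\<psi>. chain_endo R C a d \<psi> \<and>
          cx_homotopic R C a d (\<lambda>n. \<psi> n \<circ> \<phi> n) (\<lambda>n x. x) \<and>
          cx_homotopic R C a d (\<lambda>n. \<phi> n \<circ> \<psi> n) (\<lambda>n x. x))"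

definition minimal_cx ::
  "('a, 'r) ring_scheme \<Rightarrow> ('a, 'c, 'm) module_scheme \<Rightarrow> (nat \<Rightarrow> nat)
     \<Rightarrow> (nat \<Rightarrow> (nat \<Rightarrow> 'c) \<Rightarrow> (nat \<Rightarrow> 'c)) \<Rightarrow> bool" where
  "minimal_cx R C a d \<longleftrightarrow>
     (\<forall>\<phi>. homotopy_equiv R C a d \<phi> \<longrightarrow>
        (\<forall>n. bij_betw (\<phi> n) (carrier (pow_mod C (a n))) (carrier (pow_mod C (a n)))))"

end

theory Submission imports Defs begin

definition cinj :: "('a,'c,'m) module_scheme \<Rightarrow> nat \<Rightarrow> 'c \<Rightarrow> nat \<Rightarrow> 'c" where
  "cinj C i c = (\<lambda>k. if k = i then c else \<zero>\<^bsub>C\<^esub>)"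

lemma pm_carrier: "carrier (pow_mod M n) = {f. (\<forall>i<n. f i \<in> carrier M) \<and> (\<forall>i. n \<le> i \<longrightarrow> f i = \<zero>\<^bsub>M\<^esub>)}"
  by (simp add: pow_mod_def)
lemma pm_add: "x \<oplus>\<^bsub>pow_mod M n\<^esub> y = (\<lambda>i. x i \<oplus>\<^bsub>M\<^esub> y i)"
  by (simp add: pow_mod_def)
lemma pm_zero: "\<zero>\<^bsub>pow_mod M n\<^esub> = (\<lambda>i. \<zero>\<^bsub>M\<^esub>)"
  by (simp add: pow_mod_def)
lemma pm_smult: "r \<odot>\<^bsub>pow_mod M n\<^esub> x = (\<lambda>i. r \<odot>\<^bsub>M\<^esub> x i)"
  by (simp add: pow_mod_def)

lemma local_units:
  fixes R :: "'a ring" (structure)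
  assumes cr: "cring R" and mm: "maximalideal m R" and uq: "\<And>I. maximalideal I R \<Longrightarrow> I = m"
    and x: "x \<in> carrier R" "x \<notin> m"
  shows "x \<in> Units R"
proof (rule ccontr)
  assume nu: "x \<notin> Units R"
  interpret cring R by (rule cr)
  define A where "A = {I. ideal I R \<and> x \<in> I \<and> \<one> \<notin> I}"
  have PA: "PIdl x \<in> A"
  proof -
    have "\<one> \<notin> PIdl x"
    proof
      assume "\<one> \<in> PIdl x"
      then obtain y where y: "y \<in> carrier R" "\<one> = y \<otimes> x" unfolding cgenideal_def by blast
      then have "x \<otimes> y = \<one>" using x m_comm by simp
      moreover have "y \<otimes> x = \<one>" using y by simp
      ultimately have "x \<in> Units R" using y x unfolding Units_def by blast
      with nu show False by simp
    qed
    then show ?thesis unfolding A_def using cgenideal_ideal[OF x(1)] cgenideal_self[OF x(1)] by blast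
  qed
  have "\<exists>M\<in>A. \<forall>X\<in>A. M \<subseteq> X \<longrightarrow> X = M"
  proof (rule subset_Zorn)
    fix Ch assume ch: "subset.chain A Ch"
    show "\<exists>U\<in>A. \<forall>X\<in>Ch. X \<subseteq> U"
    proof (cases "Ch = {}")
      case True then show ?thesis using PA by blast
    next
      case False
      have ch2: "subset.chain {I. ideal I R} Ch"
        using ch unfolding subset_chain_def A_def by blast
      have "ideal (\<Union>Ch) R" using chain_Union_is_ideal[OF ch2] False by simp
      moreover have "x \<in> \<Union>Ch" using False ch unfolding subset_chain_def A_def by blast
      moreover have "\<one> \<notin> \<Union>Ch" using ch unfolding subset_chain_def A_def by blast
      ultimately show ?thesis unfolding A_def by blast
    qed
  qed
  then obtain M where M: "M \<in> A" and Mmax: "\<And>X. X \<in> A \<Longrightarrow> M \<subseteq> X \<Longrightarrow> X = M" by blast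
  have "maximalideal M R"
  proof (rule maximalidealI)
    show "ideal M R" using M unfolding A_def by blast
    show "carrier R \<noteq> M" using M unfolding A_def by blast
    fix J assume J: "ideal J R" "M \<subseteq> J" "J \<subseteq> carrier R"
    show "J = M \<or> J = carrier R"
    proof (cases "\<one> \<in> J")
      case True then show ?thesis using ideal.one_imp_carrier[OF J(1)] by blast
    next
      case False
      then have "J \<in> A" using J M unfolding A_def by blast
      then show ?thesis using Mmax J by blast
    qed
  qed
  then have "M = m" by (rule uq)
  then show False using M x(2) unfolding A_def by blast
qed


locale lctx = module R C for R :: "'a ring" and C :: "('a,'c) module" +
  fixes m :: "'a set"
  assumes m_ideal: "ideal m R" and one_notin: "\<one>\<^bsub>R\<^esub> \<notin> m"
    and units_m: "\<And>x. x \<in> carrier R \<Longrightarrow> x \<notin> m \<Longrightarrow> x \<in> Units R"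
    and homo: "homothety_iso R C"
begin

abbreviation P where "P n \<equiv> carrier (pow_mod C n)"

lemma P_iff: "x \<in> P n \<longleftrightarrow> (\<forall>i<n. x i \<in> carrier C) \<and> (\<forall>i. n \<le> i \<longrightarrow> x i = \<zero>\<^bsub>C\<^esub>)"
  by (simp add: pm_carrier)

lemma P_coord: "x \<in> P n \<Longrightarrow> x i \<in> carrier C"
  by (cases "i < n") (auto simp: P_iff)

lemma P_mono: "x \<in> P n \<Longrightarrow> n \<le> n' \<Longrightarrow> x \<in> P n'"
  apply (auto simp: P_iff) by (metis M.zero_closed not_less)

lemma zero_P: "(\<lambda>i. \<zero>\<^bsub>C\<^esub>) \<in> P n"
  by (auto simp: P_iff)

lemma inj_P: "c \<in> carrier C \<Longrightarrow> i < n \<Longrightarrow> cinj C i c \<in> P n"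
  by (auto simp: P_iff cinj_def)

lemma add_P: "x \<in> P n \<Longrightarrow> y \<in> P n \<Longrightarrow> (\<lambda>i. x i \<oplus>\<^bsub>C\<^esub> y i) \<in> P n"
  by (auto simp: P_iff)

lemma smult_P: "r \<in> carrier R \<Longrightarrow> x \<in> P n \<Longrightarrow> (\<lambda>i. r \<odot>\<^bsub>C\<^esub> x i) \<in> P n"
  by (auto simp: P_iff)

lemma neg_P: "x \<in> P n \<Longrightarrow> (\<lambda>i. \<ominus>\<^bsub>C\<^esub> x i) \<in> P n"
  by (auto simp: P_iff)

definition lin where
  "lin a b f \<longleftrightarrow> f \<in> P a \<rightarrow> P b \<and>
     (\<forall>x\<in>P a. \<forall>y\<in>P a. f (\<lambda>i. x i \<oplus>\<^bsub>C\<^esub> y i) = (\<lambda>i. f x i \<oplus>\<^bsub>C\<^esub> f y i)) \<and>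
     (\<forall>r\<in>carrier R. \<forall>x\<in>P a. f (\<lambda>i. r \<odot>\<^bsub>C\<^esub> x i) = (\<lambda>i. r \<odot>\<^bsub>C\<^esub> f x i))"

lemma lin_iff: "lin_map R (pow_mod C a) (pow_mod C b) f \<longleftrightarrow> lin a b f"
  unfolding lin_map_def lin_def pm_add pm_smult ..

lemma linD1: "lin a b f \<Longrightarrow> x \<in> P a \<Longrightarrow> f x \<in> P b"
  by (auto simp: lin_def)
lemma linD2: "lin a b f \<Longrightarrow> x \<in> P a \<Longrightarrow> y \<in> P a \<Longrightarrow> f (\<lambda>i. x i \<oplus>\<^bsub>C\<^esub> y i) = (\<lambda>i. f x i \<oplus>\<^bsub>C\<^esub> f y i)"
  by (auto simp: lin_def)
lemma linD3: "lin a b f \<Longrightarrow> r \<in> carrier R \<Longrightarrow> x \<in> P a \<Longrightarrow> f (\<lambda>i. r \<odot>\<^bsub>C\<^esub> x i) = (\<lambda>i. r \<odot>\<^bsub>C\<^esub> f x i)"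
  by (auto simp: lin_def)

lemma lin_zero: assumes "lin a b f" shows "f (\<lambda>i. \<zero>\<^bsub>C\<^esub>) = (\<lambda>i. \<zero>\<^bsub>C\<^esub>)"
proof -
  have "f (\<lambda>i. \<zero>\<^bsub>C\<^esub>) = f (\<lambda>i. \<zero>\<^bsub>C\<^esub> \<oplus>\<^bsub>C\<^esub> \<zero>\<^bsub>C\<^esub>)" by simp
  also have "\<dots> = (\<lambda>i. f (\<lambda>i. \<zero>\<^bsub>C\<^esub>) i \<oplus>\<^bsub>C\<^esub> f (\<lambda>i. \<zero>\<^bsub>C\<^esub>) i)"
    using linD2[OF assms zero_P zero_P] by simp
  finally have e0: "f (\<lambda>i. \<zero>\<^bsub>C\<^esub>) = (\<lambda>i. f (\<lambda>i. \<zero>\<^bsub>C\<^esub>) i \<oplus>\<^bsub>C\<^esub> f (\<lambda>i. \<zero>\<^bsub>C\<^esub>) i)" .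
  have e: "\<And>i. f (\<lambda>i. \<zero>\<^bsub>C\<^esub>) i = f (\<lambda>i. \<zero>\<^bsub>C\<^esub>) i \<oplus>\<^bsub>C\<^esub> f (\<lambda>i. \<zero>\<^bsub>C\<^esub>) i"
    by (rule fun_cong[OF e0, simplified])
  have c: "\<And>i. f (\<lambda>i. \<zero>\<^bsub>C\<^esub>) i \<in> carrier C" using linD1[OF assms zero_P] P_coord by blast
  show ?thesis
  proof
    fix i show "f (\<lambda>i. \<zero>\<^bsub>C\<^esub>) i = \<zero>\<^bsub>C\<^esub>"
      using e[of i] c[of i] by simp
  qed
qed

lemma lin_neg: assumes "lin a b f" "x \<in> P a" shows "f (\<lambda>i. \<ominus>\<^bsub>C\<^esub> x i) = (\<lambda>i. \<ominus>\<^bsub>C\<^esub> f x i)"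
proof -
  have "(\<lambda>i. f (\<lambda>i. \<ominus>\<^bsub>C\<^esub> x i) i \<oplus>\<^bsub>C\<^esub> f x i) = f (\<lambda>i. \<ominus>\<^bsub>C\<^esub> x i \<oplus>\<^bsub>C\<^esub> x i)"
    using linD2[OF assms(1) neg_P[OF assms(2)] assms(2)] by simp
  also have "(\<lambda>i. \<ominus>\<^bsub>C\<^esub> x i \<oplus>\<^bsub>C\<^esub> x i) = (\<lambda>i. \<zero>\<^bsub>C\<^esub>)"
    using assms(2) P_coord by (auto simp: M.l_neg)
  finally have e0: "(\<lambda>i. f (\<lambda>i. \<ominus>\<^bsub>C\<^esub> x i) i \<oplus>\<^bsub>C\<^esub> f x i) = (\<lambda>i. \<zero>\<^bsub>C\<^esub>)"
    using lin_zero[OF assms(1)] by simp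
  have e: "\<And>i. f (\<lambda>i. \<ominus>\<^bsub>C\<^esub> x i) i \<oplus>\<^bsub>C\<^esub> f x i = \<zero>\<^bsub>C\<^esub>"
    by (rule fun_cong[OF e0, simplified])
  show ?thesis
  proof
    fix i
    have "f (\<lambda>i. \<ominus>\<^bsub>C\<^esub> x i) i \<in> carrier C" "f x i \<in> carrier C"
      using linD1[OF assms(1) neg_P[OF assms(2)]] linD1[OF assms] P_coord by auto
    then show "f (\<lambda>i. \<ominus>\<^bsub>C\<^esub> x i) i = \<ominus>\<^bsub>C\<^esub> f x i"
      using e[of i] by (metis M.minus_equality)
  qed
qed

lemma homoE: "lin_map R C C f \<Longrightarrow> \<exists>!r. r \<in> carrier R \<and> (\<forall>c\<in>carrier C. f c = r \<odot>\<^bsub>C\<^esub> c)"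
  using homo unfolding homothety_iso_def by blast

lemma cinj_add: "c \<in> carrier C \<Longrightarrow> c' \<in> carrier C \<Longrightarrow> cinj C i (c \<oplus>\<^bsub>C\<^esub> c') = (\<lambda>k. cinj C i c k \<oplus>\<^bsub>C\<^esub> cinj C i c' k)"
  by (auto simp: cinj_def)
lemma cinj_smult: "r \<in> carrier R \<Longrightarrow> c \<in> carrier C \<Longrightarrow> cinj C i (r \<odot>\<^bsub>C\<^esub> c) = (\<lambda>k. r \<odot>\<^bsub>C\<^esub> cinj C i c k)"
  by (auto simp: cinj_def)

lemma coord_lin: assumes "lin a b f" "i < a"
  shows "lin_map R C C (\<lambda>c. f (cinj C i c) j)"
  unfolding lin_map_def
proof (intro conjI ballI)
  show "(\<lambda>c. f (cinj C i c) j) \<in> carrier C \<rightarrow> carrier C"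
  proof
    fix c assume c: "c \<in> carrier C"
    show "f (cinj C i c) j \<in> carrier C" by (rule P_coord[OF linD1[OF assms(1) inj_P[OF c assms(2)]]])
  qed
  fix x y assume "x \<in> carrier C" "y \<in> carrier C"
  then show "f (cinj C i (x \<oplus>\<^bsub>C\<^esub> y)) j = f (cinj C i x) j \<oplus>\<^bsub>C\<^esub> f (cinj C i y) j"
    using linD2[OF assms(1) inj_P inj_P] assms(2) by (simp add: cinj_add)
next
  fix r x assume "r \<in> carrier R" "x \<in> carrier C"
  then show "f (cinj C i (r \<odot>\<^bsub>C\<^esub> x)) j = r \<odot>\<^bsub>C\<^esub> f (cinj C i x) j"
    using linD3[OF assms(1) _ inj_P] assms(2) by (simp add: cinj_smult)
qed

lemma coefE: assumes "lin a b f" "i < a"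
  obtains r where "r \<in> carrier R" "\<And>c. c \<in> carrier C \<Longrightarrow> f (cinj C i c) j = r \<odot>\<^bsub>C\<^esub> c"
proof -
  from ex1_implies_ex[OF homoE[OF coord_lin[OF assms]]] obtain r where
    "r \<in> carrier R" "\<forall>c\<in>carrier C. f (cinj C i c) j = r \<odot>\<^bsub>C\<^esub> c" by blast
  then show ?thesis using that by blast
qed

lemma decomp: assumes "x \<in> P (Suc b)"
  shows "x = (\<lambda>k. (x(b := \<zero>\<^bsub>C\<^esub>)) k \<oplus>\<^bsub>C\<^esub> cinj C b (x b) k)" "x(b := \<zero>\<^bsub>C\<^esub>) \<in> P b"
proof -
  show "x = (\<lambda>k. (x(b := \<zero>\<^bsub>C\<^esub>)) k \<oplus>\<^bsub>C\<^esub> cinj C b (x b) k)"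
  proof
    fix k
    have "x k \<in> carrier C" using assms P_coord by blast
    then show "x k = (x(b := \<zero>\<^bsub>C\<^esub>)) k \<oplus>\<^bsub>C\<^esub> cinj C b (x b) k"
      by (cases "k = b") (auto simp: cinj_def)
  qed
  show "x(b := \<zero>\<^bsub>C\<^esub>) \<in> P b" using assms by (auto simp: P_iff)
qed

lemma m_sub: "m \<subseteq> carrier R"
  using additive_subgroup.a_subset[OF ideal.axioms(1)[OF m_ideal]] .
lemma m_add: "x \<in> m \<Longrightarrow> y \<in> m \<Longrightarrow> x \<oplus>\<^bsub>R\<^esub> y \<in> m"
  using additive_subgroup.a_closed[OF ideal.axioms(1)[OF m_ideal]] by blast
lemma m_zero: "\<zero>\<^bsub>R\<^esub> \<in> m"
  using additive_subgroup.zero_closed[OF ideal.axioms(1)[OF m_ideal]] by blast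
lemma m_neg: "x \<in> m \<Longrightarrow> \<ominus>\<^bsub>R\<^esub> x \<in> m"
  using additive_subgroup.a_inv_closed[OF ideal.axioms(1)[OF m_ideal]] by blast
lemma m_lmult: "x \<in> carrier R \<Longrightarrow> y \<in> m \<Longrightarrow> x \<otimes>\<^bsub>R\<^esub> y \<in> m"
  using ideal.I_l_closed[OF m_ideal] by blast
lemma m_rmult: "x \<in> m \<Longrightarrow> y \<in> carrier R \<Longrightarrow> x \<otimes>\<^bsub>R\<^esub> y \<in> m"
  using ideal.I_r_closed[OF m_ideal] by blast

lemma linC_iff: "lin_map R C (pow_mod C b) h \<longleftrightarrow> h \<in> carrier C \<rightarrow> P b \<and>
     (\<forall>x\<in>carrier C. \<forall>y\<in>carrier C. h (x \<oplus>\<^bsub>C\<^esub> y) = (\<lambda>i. h x i \<oplus>\<^bsub>C\<^esub> h y i)) \<and>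
     (\<forall>r\<in>carrier R. \<forall>x\<in>carrier C. h (r \<odot>\<^bsub>C\<^esub> x) = (\<lambda>i. r \<odot>\<^bsub>C\<^esub> h x i))"
  unfolding lin_map_def pm_add pm_smult ..

lemma linC_coord: assumes "lin_map R C (pow_mod C b) h" shows "lin_map R C C (\<lambda>c. h c k)"
  using assms[unfolded linC_iff] unfolding lin_map_def by (auto intro: P_coord)

lemma linC_trunc: assumes "lin_map R C (pow_mod C (Suc b)) h"
  shows "lin_map R C (pow_mod C b) (\<lambda>c. (h c)(b := \<zero>\<^bsub>C\<^esub>))"
  unfolding linC_iff
proof (intro conjI ballI)
  show "(\<lambda>c. (h c)(b := \<zero>\<^bsub>C\<^esub>)) \<in> carrier C \<rightarrow> P b"
    using assms decomp(2) unfolding linC_iff by blast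
  fix x y assume "x \<in> carrier C" "y \<in> carrier C"
  then show "(h (x \<oplus>\<^bsub>C\<^esub> y))(b := \<zero>\<^bsub>C\<^esub>) = (\<lambda>i. ((h x)(b := \<zero>\<^bsub>C\<^esub>)) i \<oplus>\<^bsub>C\<^esub> ((h y)(b := \<zero>\<^bsub>C\<^esub>)) i)"
    using assms unfolding linC_iff by (auto simp: fun_eq_iff)
next
  fix r x assume "r \<in> carrier R" "x \<in> carrier C"
  then show "(h (r \<odot>\<^bsub>C\<^esub> x))(b := \<zero>\<^bsub>C\<^esub>) = (\<lambda>i. r \<odot>\<^bsub>C\<^esub> ((h x)(b := \<zero>\<^bsub>C\<^esub>)) i)"
    using assms unfolding linC_iff by (auto simp: fun_eq_iff)
qed

lemma homoC: assumes "lin_map R C C g"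
  obtains G where "G \<in> carrier R" "\<And>c. c \<in> carrier C \<Longrightarrow> g c = G \<odot>\<^bsub>C\<^esub> c"
proof -
  from ex1_implies_ex[OF homoE[OF assms]] obtain G where
    "G \<in> carrier R" "\<forall>c\<in>carrier C. g c = G \<odot>\<^bsub>C\<^esub> c" by blast
  then show ?thesis using that by blast
qed

lemma comp_small_aux:
  assumes f: "lin b b2 f"
  shows "b' \<le> b \<Longrightarrow> lin_map R C (pow_mod C b') h \<Longrightarrow>
    (\<forall>k<b'. \<forall>F G. F \<in> carrier R \<longrightarrow> G \<in> carrier R \<longrightarrow> (\<forall>c\<in>carrier C. f (cinj C k c) j = F \<odot>\<^bsub>C\<^esub> c)
        \<longrightarrow> (\<forall>c\<in>carrier C. h c k = G \<odot>\<^bsub>C\<^esub> c) \<longrightarrow> F \<otimes>\<^bsub>R\<^esub> G \<in> m) \<Longrightarrow>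
    \<exists>r\<in>m. \<forall>c\<in>carrier C. f (h c) j = r \<odot>\<^bsub>C\<^esub> c"
proof (induction b' arbitrary: h)
  case 0
  have "\<forall>c\<in>carrier C. f (h c) j = \<zero>\<^bsub>R\<^esub> \<odot>\<^bsub>C\<^esub> c"
  proof
    fix c assume c: "c \<in> carrier C"
    then have "h c \<in> P 0" using 0(2) unfolding linC_iff by blast
    then have "h c = (\<lambda>i. \<zero>\<^bsub>C\<^esub>)" by (auto simp: P_iff)
    then show "f (h c) j = \<zero>\<^bsub>R\<^esub> \<odot>\<^bsub>C\<^esub> c" using lin_zero[OF f] c by simp
  qed
  then show ?case using m_zero by blast
next
  case (Suc b')
  let ?h' = "\<lambda>c. (h c)(b' := \<zero>\<^bsub>C\<^esub>)"
  have h': "lin_map R C (pow_mod C b') ?h'" by (rule linC_trunc[OF Suc(3)])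
  have cond': "\<forall>k<b'. \<forall>F G. F \<in> carrier R \<longrightarrow> G \<in> carrier R \<longrightarrow> (\<forall>c\<in>carrier C. f (cinj C k c) j = F \<odot>\<^bsub>C\<^esub> c)
        \<longrightarrow> (\<forall>c\<in>carrier C. ?h' c k = G \<odot>\<^bsub>C\<^esub> c) \<longrightarrow> F \<otimes>\<^bsub>R\<^esub> G \<in> m"
  proof (intro allI impI)
    fix k F G assume k: "k < b'" and FG: "F \<in> carrier R" "G \<in> carrier R"
      "\<forall>c\<in>carrier C. f (cinj C k c) j = F \<odot>\<^bsub>C\<^esub> c" "\<forall>c\<in>carrier C. ?h' c k = G \<odot>\<^bsub>C\<^esub> c"
    have "\<forall>c\<in>carrier C. h c k = G \<odot>\<^bsub>C\<^esub> c" using FG(4) k by simp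
    then show "F \<otimes>\<^bsub>R\<^esub> G \<in> m" using Suc(4)[rule_format, of k F G] k FG(1-3) by simp
  qed
  have "b' \<le> b" using Suc(2) by simp
  from Suc.IH[OF this h' cond'] obtain r1 where r1: "r1 \<in> m" "\<And>c. c \<in> carrier C \<Longrightarrow> f (?h' c) j = r1 \<odot>\<^bsub>C\<^esub> c"
    by blast
  obtain G where G: "G \<in> carrier R" "\<And>c. c \<in> carrier C \<Longrightarrow> h c b' = G \<odot>\<^bsub>C\<^esub> c"
    using homoC[OF linC_coord[OF Suc(3)]] by blast
  obtain F where F: "F \<in> carrier R" "\<And>c. c \<in> carrier C \<Longrightarrow> f (cinj C b' c) j = F \<odot>\<^bsub>C\<^esub> c"
    using coefE[OF f, of b' j] Suc(2) by auto
  have F2: "\<forall>c\<in>carrier C. f (cinj C b' c) j = F \<odot>\<^bsub>C\<^esub> c" using F(2) by blast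
  have G2: "\<forall>c\<in>carrier C. h c b' = G \<odot>\<^bsub>C\<^esub> c" using G(2) by blast
  have FG: "F \<otimes>\<^bsub>R\<^esub> G \<in> m" using Suc(4)[rule_format, OF lessI F(1) G(1) F(2) G(2)] by blast
  have "\<forall>c\<in>carrier C. f (h c) j = (r1 \<oplus>\<^bsub>R\<^esub> F \<otimes>\<^bsub>R\<^esub> G) \<odot>\<^bsub>C\<^esub> c"
  proof
    fix c assume c: "c \<in> carrier C"
    have hc: "h c \<in> P (Suc b')" using Suc(3) c unfolding linC_iff by blast
    have "f (h c) = f (\<lambda>k. ?h' c k \<oplus>\<^bsub>C\<^esub> cinj C b' (h c b') k)"
      using decomp(1)[OF hc] by simp
    also have "\<dots> = (\<lambda>k. f (?h' c) k \<oplus>\<^bsub>C\<^esub> f (cinj C b' (h c b')) k)"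
    proof (rule linD2[OF f])
      show "?h' c \<in> P b" using P_mono[OF decomp(2)[OF hc]] Suc(2) by simp
      show "cinj C b' (h c b') \<in> P b" using inj_P[OF P_coord[OF hc]] Suc(2) by simp
    qed
    finally have "f (h c) j = f (?h' c) j \<oplus>\<^bsub>C\<^esub> f (cinj C b' (h c b')) j" by simp
    also have "\<dots> = r1 \<odot>\<^bsub>C\<^esub> c \<oplus>\<^bsub>C\<^esub> F \<odot>\<^bsub>C\<^esub> (G \<odot>\<^bsub>C\<^esub> c)"
      using r1(2)[OF c] F(2)[of "G \<odot>\<^bsub>C\<^esub> c"] G c by simp
    also have "\<dots> = (r1 \<oplus>\<^bsub>R\<^esub> F \<otimes>\<^bsub>R\<^esub> G) \<odot>\<^bsub>C\<^esub> c"
      using r1(1) m_sub F(1) G(1) c by (simp add: smult_l_distr smult_assoc1 subsetD)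
    finally show "f (h c) j = (r1 \<oplus>\<^bsub>R\<^esub> F \<otimes>\<^bsub>R\<^esub> G) \<odot>\<^bsub>C\<^esub> c" .
  qed
  then show ?case using m_add[OF r1(1) FG] by blast
qed

lemma lin_comp: "lin a b f \<Longrightarrow> lin b c g \<Longrightarrow> lin a c (\<lambda>x. g (f x))"
  unfolding lin_def by (auto simp: Pi_def add_P smult_P)

lemma lin_id: "a \<le> b \<Longrightarrow> lin a b (\<lambda>x. x)"
  unfolding lin_def by (auto intro: P_mono)

lemma lin_add: assumes "lin a b f" "lin a b g" shows "lin a b (\<lambda>x i. f x i \<oplus>\<^bsub>C\<^esub> g x i)"
  unfolding lin_def
proof (intro conjI ballI)
  show "(\<lambda>x i. f x i \<oplus>\<^bsub>C\<^esub> g x i) \<in> P a \<rightarrow> P b"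
  proof (rule Pi_I)
    fix x assume x: "x \<in> P a"
    show "(\<lambda>i. f x i \<oplus>\<^bsub>C\<^esub> g x i) \<in> P b" by (rule add_P[OF linD1[OF assms(1) x] linD1[OF assms(2) x]])
  qed
  fix x y assume xy: "x \<in> P a" "y \<in> P a"
  show "(\<lambda>i. f (\<lambda>i. x i \<oplus>\<^bsub>C\<^esub> y i) i \<oplus>\<^bsub>C\<^esub> g (\<lambda>i. x i \<oplus>\<^bsub>C\<^esub> y i) i) =
        (\<lambda>i. (f x i \<oplus>\<^bsub>C\<^esub> g x i) \<oplus>\<^bsub>C\<^esub> (f y i \<oplus>\<^bsub>C\<^esub> g y i))"
  proof
    fix i
    have c: "f x i \<in> carrier C" "g x i \<in> carrier C" "f y i \<in> carrier C" "g y i \<in> carrier C"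
      using P_coord[OF linD1[OF assms(1) xy(1)]] P_coord[OF linD1[OF assms(2) xy(1)]]
        P_coord[OF linD1[OF assms(1) xy(2)]] P_coord[OF linD1[OF assms(2) xy(2)]] by auto
    show "f (\<lambda>i. x i \<oplus>\<^bsub>C\<^esub> y i) i \<oplus>\<^bsub>C\<^esub> g (\<lambda>i. x i \<oplus>\<^bsub>C\<^esub> y i) i =
        (f x i \<oplus>\<^bsub>C\<^esub> g x i) \<oplus>\<^bsub>C\<^esub> (f y i \<oplus>\<^bsub>C\<^esub> g y i)"
      using linD2[OF assms(1) xy] linD2[OF assms(2) xy] c by (simp add: M.a_ac)
  qed
next
  fix r x assume rx: "r \<in> carrier R" "x \<in> P a"
  show "(\<lambda>i. f (\<lambda>i. r \<odot>\<^bsub>C\<^esub> x i) i \<oplus>\<^bsub>C\<^esub> g (\<lambda>i. r \<odot>\<^bsub>C\<^esub> x i) i) =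
        (\<lambda>i. r \<odot>\<^bsub>C\<^esub> (f x i \<oplus>\<^bsub>C\<^esub> g x i))"
  proof
    fix i
    have c: "f x i \<in> carrier C" "g x i \<in> carrier C"
      using P_coord[OF linD1[OF assms(1) rx(2)]] P_coord[OF linD1[OF assms(2) rx(2)]] by auto
    show "f (\<lambda>i. r \<odot>\<^bsub>C\<^esub> x i) i \<oplus>\<^bsub>C\<^esub> g (\<lambda>i. r \<odot>\<^bsub>C\<^esub> x i) i = r \<odot>\<^bsub>C\<^esub> (f x i \<oplus>\<^bsub>C\<^esub> g x i)"
      using linD3[OF assms(1) rx] linD3[OF assms(2) rx] c rx by (simp add: smult_r_distr)
  qed
qed

lemma lin_scale_coord: assumes "lin a b g" "s \<in> carrier R" "k < b'"
  shows "lin a b' (\<lambda>z. cinj C k (s \<odot>\<^bsub>C\<^esub> g z j))"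
  unfolding lin_def
proof (intro conjI ballI)
  show "(\<lambda>z. cinj C k (s \<odot>\<^bsub>C\<^esub> g z j)) \<in> P a \<rightarrow> P b'"
  proof (rule Pi_I)
    fix x assume x: "x \<in> P a"
    show "cinj C k (s \<odot>\<^bsub>C\<^esub> g x j) \<in> P b'"
      by (rule inj_P[OF smult_closed[OF assms(2) P_coord[OF linD1[OF assms(1) x]]] assms(3)])
  qed
  fix x y assume xy: "x \<in> P a" "y \<in> P a"
  have c: "g x j \<in> carrier C" "g y j \<in> carrier C"
    using P_coord[OF linD1[OF assms(1) xy(1)]] P_coord[OF linD1[OF assms(1) xy(2)]] by auto
  show "cinj C k (s \<odot>\<^bsub>C\<^esub> g (\<lambda>i. x i \<oplus>\<^bsub>C\<^esub> y i) j) =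
        (\<lambda>i. cinj C k (s \<odot>\<^bsub>C\<^esub> g x j) i \<oplus>\<^bsub>C\<^esub> cinj C k (s \<odot>\<^bsub>C\<^esub> g y j) i)"
    using linD2[OF assms(1) xy] c assms(2) by (auto simp: cinj_def smult_r_distr)
next
  fix r x assume rx: "r \<in> carrier R" "x \<in> P a"
  have c: "g x j \<in> carrier C"
    using P_coord[OF linD1[OF assms(1) rx(2)]] by auto
  show "cinj C k (s \<odot>\<^bsub>C\<^esub> g (\<lambda>i. r \<odot>\<^bsub>C\<^esub> x i) j) = (\<lambda>i. r \<odot>\<^bsub>C\<^esub> cinj C k (s \<odot>\<^bsub>C\<^esub> g x j) i)"
    using linD3[OF assms(1) rx] c assms(2) rx
    by (auto simp: cinj_def smult_assoc1[symmetric] R.m_comm)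
qed

lemma lin_inj: assumes "lin a b g" and ker: "\<And>x. x \<in> P a \<Longrightarrow> g x = (\<lambda>i. \<zero>\<^bsub>C\<^esub>) \<Longrightarrow> x = (\<lambda>i. \<zero>\<^bsub>C\<^esub>)"
  shows "inj_on g (P a)"
proof
  fix x y assume x: "x \<in> P a" and y: "y \<in> P a" and e: "g x = g y"
  have d: "(\<lambda>i. x i \<oplus>\<^bsub>C\<^esub> \<ominus>\<^bsub>C\<^esub> y i) \<in> P a" using x y by (intro add_P neg_P)
  have "g (\<lambda>i. x i \<oplus>\<^bsub>C\<^esub> \<ominus>\<^bsub>C\<^esub> y i) = (\<lambda>i. g x i \<oplus>\<^bsub>C\<^esub> \<ominus>\<^bsub>C\<^esub> g y i)"
    using linD2[OF assms(1) x neg_P[OF y]] lin_neg[OF assms(1) y] by simp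
  also have "\<dots> = (\<lambda>i. \<zero>\<^bsub>C\<^esub>)"
    using e linD1[OF assms(1) y] P_coord by (auto simp: M.r_neg)
  finally have "(\<lambda>i. x i \<oplus>\<^bsub>C\<^esub> \<ominus>\<^bsub>C\<^esub> y i) = (\<lambda>i. \<zero>\<^bsub>C\<^esub>)" using ker[OF d] by blast
  then have "\<And>i. x i \<oplus>\<^bsub>C\<^esub> \<ominus>\<^bsub>C\<^esub> y i = \<zero>\<^bsub>C\<^esub>" by metis
  then show "x = y"
  proof -
    assume h: "\<And>i. x i \<oplus>\<^bsub>C\<^esub> \<ominus>\<^bsub>C\<^esub> y i = \<zero>\<^bsub>C\<^esub>"
    show "x = y"
    proof
      fix i show "x i = y i" using h[of i] P_coord[OF x] P_coord[OF y]
        by (metis M.add.inv_closed M.minus_equality M.minus_minus)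
    qed
  qed
qed

lemma lin_restrict: assumes "lin a b g" "a' \<le> a" shows "lin a' b g"
  unfolding lin_def
proof (intro conjI ballI)
  show "g \<in> P a' \<rightarrow> P b" using linD1[OF assms(1) P_mono] assms(2) by blast
  fix x y assume "x \<in> P a'" "y \<in> P a'"
  then show "g (\<lambda>i. x i \<oplus>\<^bsub>C\<^esub> y i) = (\<lambda>i. g x i \<oplus>\<^bsub>C\<^esub> g y i)"
    using linD2[OF assms(1) P_mono P_mono] assms(2) by blast
next
  fix r x assume "r \<in> carrier R" "x \<in> P a'"
  then show "g (\<lambda>i. r \<odot>\<^bsub>C\<^esub> x i) = (\<lambda>i. r \<odot>\<^bsub>C\<^esub> g x i)"
    using linD3[OF assms(1) _ P_mono] assms(2) by blast
qed

lemma P_shrink: assumes "x \<in> P (Suc b)" "x b = \<zero>\<^bsub>C\<^esub>" shows "x \<in> P b"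
  using assms unfolding P_iff by (metis Suc_leI le_less less_Suc_eq)

lemma lin_shrink: assumes "lin a (Suc b) f" "\<And>z. z \<in> P a \<Longrightarrow> f z b = \<zero>\<^bsub>C\<^esub>" shows "lin a b f"
  using assms unfolding lin_def
proof (intro conjI)
  show "f \<in> P a \<rightarrow> P b"
  proof (rule Pi_I)
    fix z assume z: "z \<in> P a"
    have "f z \<in> P (Suc b)" using linD1[OF assms(1) z] .
    then show "f z \<in> P b" using assms(2)[OF z] by (rule P_shrink)
  qed
qed (auto simp: lin_def)

lemma P0: "P 0 = {(\<lambda>i. \<zero>\<^bsub>C\<^esub>)}"
  by (auto simp: P_iff)

definition near_id where
  "near_id a g \<longleftrightarrow> (\<forall>i<a. \<forall>j<a. \<exists>r\<in>carrier R. (\<forall>c\<in>carrier C. g (cinj C i c) j = r \<odot>\<^bsub>C\<^esub> c) \<and>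
     (i = j \<longrightarrow> r \<notin> m) \<and> (i \<noteq> j \<longrightarrow> r \<in> m))"

lemma near_idE: assumes "near_id a g" "i < a" "j < a"
  obtains r where "r \<in> carrier R" "\<And>c. c \<in> carrier C \<Longrightarrow> g (cinj C i c) j = r \<odot>\<^bsub>C\<^esub> c"
    "i = j \<Longrightarrow> r \<notin> m" "i \<noteq> j \<Longrightarrow> r \<in> m"
proof -
  from assms(1)[unfolded near_id_def, rule_format, OF assms(2,3)] obtain r where r: "r \<in> carrier R"
    "\<forall>c\<in>carrier C. g (cinj C i c) j = r \<odot>\<^bsub>C\<^esub> c"
    "i = j \<longrightarrow> r \<notin> m" "i \<noteq> j \<longrightarrow> r \<in> m" by blast
  show ?thesis by (rule that[OF r(1)]) (use r in auto)
qed

lemma padd_at: "lin a b g \<Longrightarrow> x \<in> P a \<Longrightarrow> y \<in> P a \<Longrightarrow> g (\<lambda>i. x i \<oplus>\<^bsub>C\<^esub> y i) j = g x j \<oplus>\<^bsub>C\<^esub> g y j"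
  by (simp add: linD2)

lemma near_id_bij: "lin a a g \<Longrightarrow> near_id a g \<Longrightarrow> bij_betw g (P a) (P a)"
proof (induction a arbitrary: g)
  case 0
  have "g (\<lambda>i. \<zero>\<^bsub>C\<^esub>) = (\<lambda>i. \<zero>\<^bsub>C\<^esub>)" by (rule lin_zero[OF 0(1)])
  then show ?case unfolding P0 bij_betw_def by simp
next
  case (Suc a)
  have g: "lin (Suc a) (Suc a) g" by fact
  have N: "near_id (Suc a) g" by fact
  obtain u where u: "u \<in> carrier R" "\<And>c. c \<in> carrier C \<Longrightarrow> g (cinj C a c) a = u \<odot>\<^bsub>C\<^esub> c" "u \<notin> m"
    using near_idE[OF N, of a a] by auto
  have uU: "u \<in> Units R" using units_m u by blast
  define ui where "ui = inv\<^bsub>R\<^esub> u"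
  have ui: "ui \<in> carrier R" "u \<otimes>\<^bsub>R\<^esub> ui = \<one>\<^bsub>R\<^esub>" "ui \<otimes>\<^bsub>R\<^esub> u = \<one>\<^bsub>R\<^esub>"
    using uU unfolding ui_def by auto
  define v where "v = \<ominus>\<^bsub>R\<^esub> ui"
  have v: "v \<in> carrier R" using ui unfolding v_def by simp
  have uv: "u \<otimes>\<^bsub>R\<^esub> v = \<ominus>\<^bsub>R\<^esub> \<one>\<^bsub>R\<^esub>" using ui u unfolding v_def by (simp add: R.r_minus)
  have gr: "lin a (Suc a) g" using lin_restrict[OF g] by simp
  define lift where "lift z = (\<lambda>i. z i \<oplus>\<^bsub>C\<^esub> cinj C a (v \<odot>\<^bsub>C\<^esub> g z a) i)" for z
  have lift_lin: "lin a (Suc a) lift"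
    unfolding lift_def by (rule lin_add[OF lin_id lin_scale_coord[OF gr v]]) auto
  have liftP: "z \<in> P a \<Longrightarrow> lift z \<in> P (Suc a)" for z using linD1[OF lift_lin] by blast
  have gza: "z \<in> P a \<Longrightarrow> g z a \<in> carrier C" for z using P_coord[OF linD1[OF gr]] by blast
  have key: "g (lift z) a = \<zero>\<^bsub>C\<^esub>" if z: "z \<in> P a" for z
  proof -
    have zP: "z \<in> P (Suc a)" using P_mono[OF z] by simp
    have wc: "v \<odot>\<^bsub>C\<^esub> g z a \<in> carrier C" using gza[OF z] v by simp
    have "g (lift z) a = g z a \<oplus>\<^bsub>C\<^esub> g (cinj C a (v \<odot>\<^bsub>C\<^esub> g z a)) a"
      unfolding lift_def by (rule padd_at[OF g zP inj_P[OF wc]]) simp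
    also have "\<dots> = g z a \<oplus>\<^bsub>C\<^esub> u \<odot>\<^bsub>C\<^esub> (v \<odot>\<^bsub>C\<^esub> g z a)" using u(2)[OF wc] by simp
    also have "\<dots> = g z a \<oplus>\<^bsub>C\<^esub> (\<ominus>\<^bsub>R\<^esub> \<one>\<^bsub>R\<^esub>) \<odot>\<^bsub>C\<^esub> g z a"
      using smult_assoc1[OF u(1) v gza[OF z]] uv by simp
    also have "\<dots> = \<zero>\<^bsub>C\<^esub>" using gza[OF z] by (simp add: smult_l_minus M.r_neg)
    finally show ?thesis .
  qed
  define g' where "g' z = g (lift z)" for z
  have g'lin: "lin a a g'"
    unfolding g'_def by (rule lin_shrink[OF lin_comp[OF lift_lin g]]) (rule key)
  have N': "near_id a g'"
    unfolding near_id_def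
  proof (intro allI impI)
    fix i j assume ij: "i < a" "j < a"
    obtain rai where rai: "rai \<in> carrier R" "\<And>c. c \<in> carrier C \<Longrightarrow> g (cinj C i c) a = rai \<odot>\<^bsub>C\<^esub> c"
      using near_idE[OF N, of i a] ij by auto
    obtain rji where rji: "rji \<in> carrier R" "\<And>c. c \<in> carrier C \<Longrightarrow> g (cinj C i c) j = rji \<odot>\<^bsub>C\<^esub> c"
      "i = j \<Longrightarrow> rji \<notin> m" "i \<noteq> j \<Longrightarrow> rji \<in> m"
      using near_idE[OF N, of i j] ij by auto
    obtain rja where rja: "rja \<in> carrier R" "\<And>c. c \<in> carrier C \<Longrightarrow> g (cinj C a c) j = rja \<odot>\<^bsub>C\<^esub> c"
      "rja \<in> m"
      using near_idE[OF N, of a j] ij by auto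
    define r where "r = rji \<oplus>\<^bsub>R\<^esub> rja \<otimes>\<^bsub>R\<^esub> (v \<otimes>\<^bsub>R\<^esub> rai)"
    have r: "r \<in> carrier R" unfolding r_def using rji rja v rai by simp
    have rm: "rja \<otimes>\<^bsub>R\<^esub> (v \<otimes>\<^bsub>R\<^esub> rai) \<in> m" using m_rmult[OF rja(3)] v rai by simp
    have "\<forall>c\<in>carrier C. g' (cinj C i c) j = r \<odot>\<^bsub>C\<^esub> c"
    proof
      fix c assume c: "c \<in> carrier C"
      have ic: "cinj C i c \<in> P a" using inj_P[OF c ij(1)] .
      have wc: "v \<odot>\<^bsub>C\<^esub> (rai \<odot>\<^bsub>C\<^esub> c) \<in> carrier C" using v rai c by simp
      have "g' (cinj C i c) j = g (\<lambda>k. cinj C i c k \<oplus>\<^bsub>C\<^esub> cinj C a (v \<odot>\<^bsub>C\<^esub> (rai \<odot>\<^bsub>C\<^esub> c)) k) j"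
        unfolding g'_def lift_def using rai(2)[OF c] by simp
      also have "\<dots> = g (cinj C i c) j \<oplus>\<^bsub>C\<^esub> g (cinj C a (v \<odot>\<^bsub>C\<^esub> (rai \<odot>\<^bsub>C\<^esub> c))) j"
        by (rule padd_at[OF g]) (use inj_P[OF c] ij inj_P[OF wc] in auto)
      also have "\<dots> = rji \<odot>\<^bsub>C\<^esub> c \<oplus>\<^bsub>C\<^esub> rja \<odot>\<^bsub>C\<^esub> (v \<odot>\<^bsub>C\<^esub> (rai \<odot>\<^bsub>C\<^esub> c))"
        using rji(2)[OF c] rja(2)[OF wc] by simp
      also have "\<dots> = r \<odot>\<^bsub>C\<^esub> c"
        unfolding r_def using rji(1) rja(1) v rai(1) c
        by (simp add: smult_l_distr smult_assoc1)
      finally show "g' (cinj C i c) j = r \<odot>\<^bsub>C\<^esub> c" .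
    qed
    moreover have "i = j \<longrightarrow> r \<notin> m"
    proof
      assume "i = j"
      then have "rji \<notin> m" using rji(3) by simp
      show "r \<notin> m"
      proof
        assume "r \<in> m"
        then have "r \<oplus>\<^bsub>R\<^esub> \<ominus>\<^bsub>R\<^esub> (rja \<otimes>\<^bsub>R\<^esub> (v \<otimes>\<^bsub>R\<^esub> rai)) \<in> m" using m_add m_neg rm by blast
        moreover have "r \<oplus>\<^bsub>R\<^esub> \<ominus>\<^bsub>R\<^esub> (rja \<otimes>\<^bsub>R\<^esub> (v \<otimes>\<^bsub>R\<^esub> rai)) = rji"
          unfolding r_def using rji(1) rja(1) v rai(1) by (simp add: R.a_assoc R.r_neg)
        ultimately show False using \<open>rji \<notin> m\<close> by simp
      qed
    qed
    moreover have "i \<noteq> j \<longrightarrow> r \<in> m"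
      using rji(4) rm m_add unfolding r_def by blast
    ultimately show "\<exists>r\<in>carrier R. (\<forall>c\<in>carrier C. g' (cinj C i c) j = r \<odot>\<^bsub>C\<^esub> c) \<and>
       (i = j \<longrightarrow> r \<notin> m) \<and> (i \<noteq> j \<longrightarrow> r \<in> m)" using r by blast
  qed
  have bij': "bij_betw g' (P a) (P a)" by (rule Suc.IH[OF g'lin N'])
  have g'0: "g' (\<lambda>i. \<zero>\<^bsub>C\<^esub>) = (\<lambda>i. \<zero>\<^bsub>C\<^esub>)" by (rule lin_zero[OF g'lin])
  have inj: "inj_on g (P (Suc a))"
  proof (rule lin_inj[OF g])
    fix x assume x: "x \<in> P (Suc a)" and gx: "g x = (\<lambda>i. \<zero>\<^bsub>C\<^esub>)"
    define z where "z = x(a := \<zero>\<^bsub>C\<^esub>)"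
    have z: "z \<in> P a" unfolding z_def by (rule decomp(2)[OF x])
    have xa: "x a \<in> carrier C" using P_coord[OF x] .
    have xd: "x = (\<lambda>k. z k \<oplus>\<^bsub>C\<^esub> cinj C a (x a) k)" unfolding z_def by (rule decomp(1)[OF x])
    have "g x a = g z a \<oplus>\<^bsub>C\<^esub> g (cinj C a (x a)) a"
      by (subst xd, rule padd_at[OF g P_mono[OF z] inj_P[OF xa]]) simp_all
    then have e: "g z a \<oplus>\<^bsub>C\<^esub> u \<odot>\<^bsub>C\<^esub> x a = \<zero>\<^bsub>C\<^esub>" using gx u(2)[OF xa] by simp
    have e2: "u \<odot>\<^bsub>C\<^esub> x a \<oplus>\<^bsub>C\<^esub> g z a = \<zero>\<^bsub>C\<^esub>" using e gza[OF z] xa u(1) by (simp add: M.a_comm)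
    have "\<ominus>\<^bsub>C\<^esub> g z a = u \<odot>\<^bsub>C\<^esub> x a"
      by (rule M.minus_equality[OF e2 gza[OF z]]) (use xa u(1) in simp)
    then have "u \<odot>\<^bsub>C\<^esub> x a = \<ominus>\<^bsub>C\<^esub> g z a" by simp
    then have "ui \<odot>\<^bsub>C\<^esub> (u \<odot>\<^bsub>C\<^esub> x a) = ui \<odot>\<^bsub>C\<^esub> (\<ominus>\<^bsub>C\<^esub> g z a)" by simp
    then have xa2: "x a = v \<odot>\<^bsub>C\<^esub> g z a"
      using ui u(1) xa gza[OF z] unfolding v_def
      by (simp add: smult_assoc1[symmetric] smult_r_minus smult_l_minus)
    have "x = lift z" unfolding lift_def using xd xa2 by simp
    then have "g' z = (\<lambda>i. \<zero>\<^bsub>C\<^esub>)" unfolding g'_def using gx by simp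
    then have "g' z = g' (\<lambda>i. \<zero>\<^bsub>C\<^esub>)" using g'0 by simp
    then have "z = (\<lambda>i. \<zero>\<^bsub>C\<^esub>)"
      by (rule inj_onD[OF bij_betw_imp_inj_on[OF bij'] _ z zero_P])
    then have "x a = \<zero>\<^bsub>C\<^esub>" using xa2 lin_zero[OF gr] v by simp
    then show "x = (\<lambda>i. \<zero>\<^bsub>C\<^esub>)" using xd \<open>z = (\<lambda>i. \<zero>\<^bsub>C\<^esub>)\<close> by (simp add: cinj_def)
  qed
  have surj: "y \<in> g ` P (Suc a)" if y: "y \<in> P (Suc a)" for y
  proof -
    have ya: "y a \<in> carrier C" using P_coord[OF y] .
    define w where "w = cinj C a (ui \<odot>\<^bsub>C\<^esub> y a)"
    have wc: "ui \<odot>\<^bsub>C\<^esub> y a \<in> carrier C" using ui(1) ya by simp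
    have wP: "w \<in> P (Suc a)" unfolding w_def by (rule inj_P[OF wc]) simp
    have gw: "g w \<in> P (Suc a)" using linD1[OF g wP] .
    have "g w a = u \<odot>\<^bsub>C\<^esub> (ui \<odot>\<^bsub>C\<^esub> y a)" unfolding w_def by (rule u(2)[OF wc])
    also have "\<dots> = (u \<otimes>\<^bsub>R\<^esub> ui) \<odot>\<^bsub>C\<^esub> y a" using smult_assoc1[OF u(1) ui(1) ya] by simp
    also have "\<dots> = y a" using ui(2) ya by simp
    finally have gwa: "g w a = y a" .
    define y' where "y' = (\<lambda>i. y i \<oplus>\<^bsub>C\<^esub> \<ominus>\<^bsub>C\<^esub> g w i)"
    have y'1: "y' \<in> P (Suc a)" unfolding y'_def using add_P[OF y neg_P[OF gw]] .
    have "y' a = \<zero>\<^bsub>C\<^esub>" unfolding y'_def using gwa ya by (simp add: M.r_neg)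
    then have y'P: "y' \<in> P a" by (rule P_shrink[OF y'1])
    have "y' \<in> g' ` P a" using bij' y'P unfolding bij_betw_def by simp
    then obtain z where z: "z \<in> P a" "g' z = y'" by (rule imageE) simp
    define x where "x = (\<lambda>i. lift z i \<oplus>\<^bsub>C\<^esub> w i)"
    have xP: "x \<in> P (Suc a)" unfolding x_def using add_P[OF liftP[OF z(1)] wP] .
    have "g x = (\<lambda>i. g (lift z) i \<oplus>\<^bsub>C\<^esub> g w i)" unfolding x_def by (rule linD2[OF g liftP[OF z(1)] wP])
    also have "\<dots> = (\<lambda>i. y' i \<oplus>\<^bsub>C\<^esub> g w i)" using z(2) unfolding g'_def by simp
    also have "\<dots> = y"
    proof
      fix i
      have "y i \<in> carrier C" "g w i \<in> carrier C" using P_coord[OF y] P_coord[OF gw] by auto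
      then show "y' i \<oplus>\<^bsub>C\<^esub> g w i = y i" unfolding y'_def by (simp add: M.a_assoc M.l_neg)
    qed
    finally show ?thesis using xP by blast
  qed
  have "g ` P (Suc a) \<subseteq> P (Suc a)" by (rule image_subsetI, rule linD1[OF g])
  moreover have "P (Suc a) \<subseteq> g ` P (Suc a)" by (rule subsetI, rule surj)
  ultimately have "g ` P (Suc a) = P (Suc a)" by (rule subset_antisym)
  then show ?case using inj unfolding bij_betw_def by blast
qed

definition small where
  "small a b f \<longleftrightarrow> (\<forall>i<a. \<forall>j<b. \<forall>F\<in>carrier R. (\<forall>c\<in>carrier C. f (cinj C i c) j = F \<odot>\<^bsub>C\<^esub> c) \<longrightarrow> F \<in> m)"

lemma h_lin: assumes "lin a b g" "i < a" shows "lin_map R C (pow_mod C b) (\<lambda>c. g (cinj C i c))"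
  unfolding linC_iff
proof (intro conjI ballI)
  show "(\<lambda>c. g (cinj C i c)) \<in> carrier C \<rightarrow> P b"
  proof (rule Pi_I)
    fix c assume "c \<in> carrier C" then show "g (cinj C i c) \<in> P b" by (rule linD1[OF assms(1) inj_P[OF _ assms(2)]])
  qed
  fix x y assume xy: "x \<in> carrier C" "y \<in> carrier C"
  show "g (cinj C i (x \<oplus>\<^bsub>C\<^esub> y)) = (\<lambda>k. g (cinj C i x) k \<oplus>\<^bsub>C\<^esub> g (cinj C i y) k)"
    unfolding cinj_add[OF xy] by (rule linD2[OF assms(1) inj_P[OF xy(1) assms(2)] inj_P[OF xy(2) assms(2)]])
next
  fix r x assume rx: "r \<in> carrier R" "x \<in> carrier C"
  show "g (cinj C i (r \<odot>\<^bsub>C\<^esub> x)) = (\<lambda>k. r \<odot>\<^bsub>C\<^esub> g (cinj C i x) k)"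
    unfolding cinj_smult[OF rx] by (rule linD3[OF assms(1) rx(1) inj_P[OF rx(2) assms(2)]])
qed

lemma comp_small1: assumes f: "lin b b2 f" "small b b2 f" and g: "lin a b g" and ij: "i < a" "j < b2"
  shows "\<exists>r\<in>m. \<forall>c\<in>carrier C. f (g (cinj C i c)) j = r \<odot>\<^bsub>C\<^esub> c"
proof (rule comp_small_aux[OF f(1) order_refl h_lin[OF g ij(1)]])
  show "\<forall>k<b. \<forall>F G. F \<in> carrier R \<longrightarrow> G \<in> carrier R \<longrightarrow> (\<forall>c\<in>carrier C. f (cinj C k c) j = F \<odot>\<^bsub>C\<^esub> c) \<longrightarrow>
      (\<forall>c\<in>carrier C. g (cinj C i c) k = G \<odot>\<^bsub>C\<^esub> c) \<longrightarrow> F \<otimes>\<^bsub>R\<^esub> G \<in> m"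
  proof (intro allI impI)
    fix k F G assume k: "k < b" and FG: "F \<in> carrier R" "G \<in> carrier R"
      and Fc: "\<forall>c\<in>carrier C. f (cinj C k c) j = F \<odot>\<^bsub>C\<^esub> c"
    have "F \<in> m" using f(2) k ij(2) FG(1) Fc unfolding small_def by blast
    then show "F \<otimes>\<^bsub>R\<^esub> G \<in> m" by (rule m_rmult[OF _ FG(2)])
  qed
qed

lemma comp_small2: assumes f: "lin b b2 f" and g: "lin a b g" "small a b g" and i: "i < a"
  shows "\<exists>r\<in>m. \<forall>c\<in>carrier C. f (g (cinj C i c)) j = r \<odot>\<^bsub>C\<^esub> c"
proof (rule comp_small_aux[OF f(1) order_refl h_lin[OF g(1) i]])
  show "\<forall>k<b. \<forall>F G. F \<in> carrier R \<longrightarrow> G \<in> carrier R \<longrightarrow> (\<forall>c\<in>carrier C. f (cinj C k c) j = F \<odot>\<^bsub>C\<^esub> c) \<longrightarrow>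
      (\<forall>c\<in>carrier C. g (cinj C i c) k = G \<odot>\<^bsub>C\<^esub> c) \<longrightarrow> F \<otimes>\<^bsub>R\<^esub> G \<in> m"
  proof (intro allI impI)
    fix k F G assume k: "k < b" and FG: "F \<in> carrier R" "G \<in> carrier R"
      and Gc: "\<forall>c\<in>carrier C. g (cinj C i c) k = G \<odot>\<^bsub>C\<^esub> c"
    have "G \<in> m" using g(2) k i FG(2) Gc unfolding small_def by blast
    then show "F \<otimes>\<^bsub>R\<^esub> G \<in> m" by (rule m_lmult[OF FG(1)])
  qed
qed

lemma he_near:
  assumes d: "\<And>n. n \<ge> 1 \<Longrightarrow> lin (a n) (a (n - 1)) (d n)" "\<And>n. n \<ge> 1 \<Longrightarrow> small (a n) (a (n - 1)) (d n)"
    and ce1: "chain_endo R C a d \<phi>" and ce2: "chain_endo R C a d \<psi>"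
    and hom: "cx_homotopic R C a d (\<lambda>n. \<psi> n \<circ> \<phi> n) (\<lambda>n x. x)"
  shows "lin (a n) (a n) (\<lambda>x. \<psi> n (\<phi> n x)) \<and> near_id (a n) (\<lambda>x. \<psi> n (\<phi> n x))"
proof
  have l1: "lin (a n) (a n) (\<phi> n)" and l2: "lin (a n) (a n) (\<psi> n)"
    using ce1 ce2 unfolding chain_endo_def lin_iff by blast+
  show "lin (a n) (a n) (\<lambda>x. \<psi> n (\<phi> n x))" by (rule lin_comp[OF l1 l2])
  obtain s where s: "\<And>n. lin (a n) (a (Suc n)) (s n)"
    and sf: "\<And>n x. x \<in> P (a n) \<Longrightarrow> \<psi> n (\<phi> n x) = (\<lambda>i. (x i \<oplus>\<^bsub>C\<^esub> d (Suc n) (s n x) i) \<oplus>\<^bsub>C\<^esub>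
                 (if n = 0 then (\<lambda>i. \<zero>\<^bsub>C\<^esub>) else s (n - 1) (d n x)) i)"
    using hom unfolding cx_homotopic_def lin_iff pm_add pm_zero by auto
  show "near_id (a n) (\<lambda>x. \<psi> n (\<phi> n x))"
    unfolding near_id_def
  proof (intro allI impI)
    fix i j assume ij: "i < a n" "j < a n"
    have dS: "lin (a (Suc n)) (a n) (d (Suc n))" "small (a (Suc n)) (a n) (d (Suc n))" using d[of "Suc n"] by auto
    obtain r1 where r1: "r1 \<in> m" "\<And>c. c \<in> carrier C \<Longrightarrow> d (Suc n) (s n (cinj C i c)) j = r1 \<odot>\<^bsub>C\<^esub> c"
      using comp_small1[OF dS s ij] by blast
    obtain r2 where r2: "r2 \<in> m" "\<And>c. c \<in> carrier C \<Longrightarrow>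
        (if n = 0 then (\<lambda>i. \<zero>\<^bsub>C\<^esub>) else s (n - 1) (d n (cinj C i c))) j = r2 \<odot>\<^bsub>C\<^esub> c"
    proof (cases "n = 0")
      case True then show ?thesis using that[of "\<zero>\<^bsub>R\<^esub>"] m_zero by simp
    next
      case False
      then have dn: "lin (a n) (a (n - 1)) (d n)" "small (a n) (a (n - 1)) (d n)" using d[of n] by auto
      have sn: "lin (a (n - 1)) (a n) (s (n - 1))" using s[of "n - 1"] False by simp
      obtain r where "r \<in> m" "\<forall>c\<in>carrier C. s (n - 1) (d n (cinj C i c)) j = r \<odot>\<^bsub>C\<^esub> c"
        using comp_small2[OF sn dn ij(1), of j] by blast
      then show ?thesis using that[of r] False by simp
    qed
    define \<delta> where "\<delta> = (if i = j then \<one>\<^bsub>R\<^esub> else \<zero>\<^bsub>R\<^esub>)"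
    have \<delta>: "\<delta> \<in> carrier R" unfolding \<delta>_def by simp
    define r where "r = \<delta> \<oplus>\<^bsub>R\<^esub> (r1 \<oplus>\<^bsub>R\<^esub> r2)"
    have r12: "r1 \<oplus>\<^bsub>R\<^esub> r2 \<in> m" using m_add r1(1) r2(1) by blast
    have rc: "r1 \<in> carrier R" "r2 \<in> carrier R" using r1(1) r2(1) m_sub by auto
    have r: "r \<in> carrier R" unfolding r_def using \<delta> rc by simp
    have "\<forall>c\<in>carrier C. \<psi> n (\<phi> n (cinj C i c)) j = r \<odot>\<^bsub>C\<^esub> c"
    proof
      fix c assume c: "c \<in> carrier C"
      have "\<psi> n (\<phi> n (cinj C i c)) j = (cinj C i c j \<oplus>\<^bsub>C\<^esub> d (Suc n) (s n (cinj C i c)) j) \<oplus>\<^bsub>C\<^esub>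
                 (if n = 0 then (\<lambda>i. \<zero>\<^bsub>C\<^esub>) else s (n - 1) (d n (cinj C i c))) j"
        using sf[OF inj_P[OF c ij(1)]] by simp
      also have "\<dots> = (\<delta> \<odot>\<^bsub>C\<^esub> c \<oplus>\<^bsub>C\<^esub> r1 \<odot>\<^bsub>C\<^esub> c) \<oplus>\<^bsub>C\<^esub> r2 \<odot>\<^bsub>C\<^esub> c"
        using r1(2)[OF c] r2(2)[OF c] c unfolding \<delta>_def cinj_def by simp
      also have "\<dots> = r \<odot>\<^bsub>C\<^esub> c" unfolding r_def using \<delta> rc c by (simp add: smult_l_distr M.a_assoc)
      finally show "\<psi> n (\<phi> n (cinj C i c)) j = r \<odot>\<^bsub>C\<^esub> c" .
    qed
    moreover have "i = j \<longrightarrow> r \<notin> m"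
    proof (intro impI notI)
      assume "i = j" "r \<in> m"
      then have "r \<oplus>\<^bsub>R\<^esub> \<ominus>\<^bsub>R\<^esub> (r1 \<oplus>\<^bsub>R\<^esub> r2) \<in> m" using m_add m_neg r12 by blast
      moreover have "r \<oplus>\<^bsub>R\<^esub> \<ominus>\<^bsub>R\<^esub> (r1 \<oplus>\<^bsub>R\<^esub> r2) = \<one>\<^bsub>R\<^esub>"
        unfolding r_def \<delta>_def using \<open>i = j\<close> rc by (simp add: R.a_assoc R.r_neg)
      ultimately show False using one_notin by simp
    qed
    moreover have "i \<noteq> j \<longrightarrow> r \<in> m" unfolding r_def \<delta>_def using r12 rc by simp
    ultimately show "\<exists>r\<in>carrier R. (\<forall>c\<in>carrier C. \<psi> n (\<phi> n (cinj C i c)) j = r \<odot>\<^bsub>C\<^esub> c) \<and>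
       (i = j \<longrightarrow> r \<notin> m) \<and> (i \<noteq> j \<longrightarrow> r \<in> m)" using r by blast
  qed
qed

lemma minimal_of_small:
  assumes d: "\<And>n. n \<ge> 1 \<Longrightarrow> lin (a n) (a (n - 1)) (d n)" "\<And>n. n \<ge> 1 \<Longrightarrow> small (a n) (a (n - 1)) (d n)"
  shows "minimal_cx R C a d"
  unfolding minimal_cx_def
proof (intro allI impI)
  fix \<phi> n assume he: "homotopy_equiv R C a d \<phi>"
  then obtain \<psi> where ce1: "chain_endo R C a d \<phi>" and ce2: "chain_endo R C a d \<psi>"
    and h1: "cx_homotopic R C a d (\<lambda>n. \<psi> n \<circ> \<phi> n) (\<lambda>n x. x)"
    and h2: "cx_homotopic R C a d (\<lambda>n. \<phi> n \<circ> \<psi> n) (\<lambda>n x. x)"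
    unfolding homotopy_equiv_def by blast
  have A: "lin (a n) (a n) (\<lambda>x. \<psi> n (\<phi> n x)) \<and> near_id (a n) (\<lambda>x. \<psi> n (\<phi> n x))"
    by (rule he_near[OF d ce1 ce2 h1])
  have B: "lin (a n) (a n) (\<lambda>x. \<phi> n (\<psi> n x)) \<and> near_id (a n) (\<lambda>x. \<phi> n (\<psi> n x))"
    by (rule he_near[OF d ce2 ce1 h2])
  have bA: "bij_betw (\<lambda>x. \<psi> n (\<phi> n x)) (P (a n)) (P (a n))" using near_id_bij A by blast
  have bB: "bij_betw (\<lambda>x. \<phi> n (\<psi> n x)) (P (a n)) (P (a n))" using near_id_bij B by blast
  have l1: "lin (a n) (a n) (\<phi> n)" and l2: "lin (a n) (a n) (\<psi> n)"
    using ce1 ce2 unfolding chain_endo_def lin_iff by blast+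
  have inj: "inj_on (\<phi> n) (P (a n))"
  proof (rule inj_onI)
    fix x y assume "x \<in> P (a n)" "y \<in> P (a n)" "\<phi> n x = \<phi> n y"
    then show "x = y" using bij_betw_imp_inj_on[OF bA] unfolding inj_on_def by simp
  qed
  have "\<phi> n ` P (a n) \<subseteq> P (a n)" by (rule image_subsetI, rule linD1[OF l1])
  moreover have "P (a n) \<subseteq> \<phi> n ` P (a n)"
  proof (rule subsetI)
    fix y assume y: "y \<in> P (a n)"
    then have "y \<in> (\<lambda>x. \<phi> n (\<psi> n x)) ` P (a n)" using bij_betw_imp_surj_on[OF bB] by simp
    then obtain x where x: "x \<in> P (a n)" "y = \<phi> n (\<psi> n x)" by (rule imageE) simp
    show "y \<in> \<phi> n ` P (a n)" using x linD1[OF l2 x(1)] by (metis image_eqI)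
  qed
  ultimately have "\<phi> n ` P (a n) = P (a n)" by (rule subset_antisym)
  then show "bij_betw (\<phi> n) (P (a n)) (P (a n))" using inj unfolding bij_betw_def by simp
qed

lemma res_iff: "pow_resolution R C M a d e \<longleftrightarrow>
   (\<forall>n\<ge>1. lin (a n) (a (n - 1)) (d n)) \<and>
   (\<forall>n\<ge>1. {x \<in> P (a n). d n x = (\<lambda>i. \<zero>\<^bsub>C\<^esub>)} = d (Suc n) ` P (a (Suc n))) \<and>
   lin_map R (pow_mod C (a 0)) M e \<and> e ` P (a 0) = carrier M \<and>
   {x \<in> P (a 0). e x = \<zero>\<^bsub>M\<^esub>} = d 1 ` P (a 1)"
  unfolding pow_resolution_def lin_iff pm_zero ..

definition iso_fam where
  "iso_fam a \<alpha> \<beta> \<longleftrightarrow> (\<forall>n. lin (a n) (a n) (\<alpha> n) \<and> lin (a n) (a n) (\<beta> n) \<and>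
      (\<forall>x\<in>P (a n). \<beta> n (\<alpha> n x) = x \<and> \<alpha> n (\<beta> n x) = x))"

lemma dd_zero: assumes "pow_resolution R C M a d e" "n \<ge> 1" "z \<in> P (a (Suc n))"
  shows "d n (d (Suc n) z) = (\<lambda>i. \<zero>\<^bsub>C\<^esub>)"
proof -
  have "d (Suc n) z \<in> d (Suc n) ` P (a (Suc n))" using assms(3) by blast
  then show ?thesis using assms(1,2) unfolding res_iff by blast
qed

lemma ed_zero: assumes "pow_resolution R C M a d e" "z \<in> P (a 1)"
  shows "e (d 1 z) = \<zero>\<^bsub>M\<^esub>"
proof -
  have "d 1 z \<in> d 1 ` P (a 1)" using assms(2) by blast
  then show ?thesis using assms(1) unfolding res_iff by blast
qed

lemma conj_res:
  assumes res: "pow_resolution R C M a d e" and I: "iso_fam a \<alpha> \<beta>"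
  shows "pow_resolution R C M a (\<lambda>n x. \<alpha> (n - 1) (d n (\<beta> n x))) (\<lambda>x. e (\<beta> 0 x))"
proof -
  have la: "\<And>n. lin (a n) (a n) (\<alpha> n)" and lb: "\<And>n. lin (a n) (a n) (\<beta> n)"
    and ba: "\<And>n x. x \<in> P (a n) \<Longrightarrow> \<beta> n (\<alpha> n x) = x" and ab: "\<And>n x. x \<in> P (a n) \<Longrightarrow> \<alpha> n (\<beta> n x) = x"
    using I unfolding iso_fam_def by auto
  note RI = res[unfolded res_iff]
  have ld: "\<And>n. n \<ge> 1 \<Longrightarrow> lin (a n) (a (n - 1)) (d n)" using conjunct1[OF RI] by simp
  have ker: "\<And>n. n \<ge> 1 \<Longrightarrow> {x \<in> P (a n). d n x = (\<lambda>i. \<zero>\<^bsub>C\<^esub>)} = d (Suc n) ` P (a (Suc n))"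
    using conjunct1[OF conjunct2[OF RI]] by simp
  have le: "lin_map R (pow_mod C (a 0)) M e" using conjunct1[OF conjunct2[OF conjunct2[OF RI]]] .
  have es: "e ` P (a 0) = carrier M" using conjunct1[OF conjunct2[OF conjunct2[OF conjunct2[OF RI]]]] .
  have ek: "{x \<in> P (a 0). e x = \<zero>\<^bsub>M\<^esub>} = d 1 ` P (a 1)"
    using conjunct2[OF conjunct2[OF conjunct2[OF conjunct2[OF RI]]]] .
  have a0: "\<And>n. \<alpha> n (\<lambda>i. \<zero>\<^bsub>C\<^esub>) = (\<lambda>i. \<zero>\<^bsub>C\<^esub>)" using lin_zero[OF la] by blast
  have ainj: "\<And>n y. y \<in> P (a n) \<Longrightarrow> \<alpha> n y = (\<lambda>i. \<zero>\<^bsub>C\<^esub>) \<Longrightarrow> y = (\<lambda>i. \<zero>\<^bsub>C\<^esub>)"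
  proof -
    fix n y assume "y \<in> P (a n)" "\<alpha> n y = (\<lambda>i. \<zero>\<^bsub>C\<^esub>)"
    then have "y = \<beta> n (\<lambda>i. \<zero>\<^bsub>C\<^esub>)" using ba by metis
    then show "y = (\<lambda>i. \<zero>\<^bsub>C\<^esub>)" using lin_zero[OF lb] by simp
  qed
  have L1: "\<forall>n\<ge>1. lin (a n) (a (n - 1)) (\<lambda>x. \<alpha> (n - 1) (d n (\<beta> n x)))"
  proof (intro allI impI)
    fix n :: nat assume n: "n \<ge> 1"
    show "lin (a n) (a (n - 1)) (\<lambda>x. \<alpha> (n - 1) (d n (\<beta> n x)))"
      by (rule lin_comp[OF lin_comp[OF lb ld[OF n]] la])
  qed
  have L2: "\<forall>n\<ge>1. {x \<in> P (a n). \<alpha> (n - 1) (d n (\<beta> n x)) = (\<lambda>i. \<zero>\<^bsub>C\<^esub>)} =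
      (\<lambda>x. \<alpha> (Suc n - 1) (d (Suc n) (\<beta> (Suc n) x))) ` P (a (Suc n))"
  proof (intro allI impI)
    fix n :: nat assume n: "n \<ge> 1"
    show "{x \<in> P (a n). \<alpha> (n - 1) (d n (\<beta> n x)) = (\<lambda>i. \<zero>\<^bsub>C\<^esub>)} =
      (\<lambda>x. \<alpha> (Suc n - 1) (d (Suc n) (\<beta> (Suc n) x))) ` P (a (Suc n))"
    proof (rule Set.set_eqI, rule iffI)
      fix x assume "x \<in> {x \<in> P (a n). \<alpha> (n - 1) (d n (\<beta> n x)) = (\<lambda>i. \<zero>\<^bsub>C\<^esub>)}"
      then have x: "x \<in> P (a n)" and x0: "\<alpha> (n - 1) (d n (\<beta> n x)) = (\<lambda>i. \<zero>\<^bsub>C\<^esub>)"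
        unfolding mem_Collect_eq by (rule conjunct1, rule conjunct2)
      have bx: "\<beta> n x \<in> P (a n)" using linD1[OF lb x] .
      have "d n (\<beta> n x) \<in> P (a (n - 1))" using linD1[OF ld[OF n] bx] .
      then have dz0: "d n (\<beta> n x) = (\<lambda>i. \<zero>\<^bsub>C\<^esub>)" by (rule ainj[OF _ x0])
      have "\<beta> n x \<in> {x \<in> P (a n). d n x = (\<lambda>i. \<zero>\<^bsub>C\<^esub>)}" unfolding mem_Collect_eq using bx dz0 by (rule conjI)
      then have "\<beta> n x \<in> d (Suc n) ` P (a (Suc n))" by (simp only: ker[OF n])
      then obtain y where y: "y \<in> P (a (Suc n))" "\<beta> n x = d (Suc n) y" by (rule imageE) simp
      have "x = \<alpha> n (\<beta> n x)" using ab[OF x] by simp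
      also have "\<dots> = \<alpha> n (d (Suc n) (\<beta> (Suc n) (\<alpha> (Suc n) y)))" using y(2) ba[OF y(1)] by simp
      finally have xe: "x = \<alpha> (Suc n - 1) (d (Suc n) (\<beta> (Suc n) (\<alpha> (Suc n) y)))" by simp
      show "x \<in> (\<lambda>x. \<alpha> (Suc n - 1) (d (Suc n) (\<beta> (Suc n) x))) ` P (a (Suc n))"
        by (rule image_eqI[where x="\<alpha> (Suc n) y" and f="\<lambda>x. \<alpha> (Suc n - 1) (d (Suc n) (\<beta> (Suc n) x))", OF xe linD1[OF la y(1)]])
    next
      fix x assume "x \<in> (\<lambda>x. \<alpha> (Suc n - 1) (d (Suc n) (\<beta> (Suc n) x))) ` P (a (Suc n))"
      then obtain y where y: "y \<in> P (a (Suc n))" "x = \<alpha> (Suc n - 1) (d (Suc n) (\<beta> (Suc n) y))" by (rule imageE)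
      then have y2: "x = \<alpha> n (d (Suc n) (\<beta> (Suc n) y))" by simp
      have by': "\<beta> (Suc n) y \<in> P (a (Suc n))" using linD1[OF lb y(1)] .
      have dz: "d (Suc n) (\<beta> (Suc n) y) \<in> P (a n)" using linD1[OF ld[of "Suc n"] by'] by simp
      have x: "x \<in> P (a n)" using linD1[OF la dz] y2 by simp
      have "\<alpha> (n - 1) (d n (\<beta> n x)) = \<alpha> (n - 1) (d n (d (Suc n) (\<beta> (Suc n) y)))"
        using y2 ba[OF dz] by simp
      also have "\<dots> = (\<lambda>i. \<zero>\<^bsub>C\<^esub>)" using dd_zero[OF res n by'] a0 by simp
      finally show "x \<in> {x \<in> P (a n). \<alpha> (n - 1) (d n (\<beta> n x)) = (\<lambda>i. \<zero>\<^bsub>C\<^esub>)}" unfolding mem_Collect_eq using x by (intro conjI)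
    qed
  qed
  have le1: "\<And>x. x \<in> P (a 0) \<Longrightarrow> e x \<in> carrier M" using le unfolding lin_map_def by blast
  have le2: "\<And>x y. x \<in> P (a 0) \<Longrightarrow> y \<in> P (a 0) \<Longrightarrow> e (\<lambda>i. x i \<oplus>\<^bsub>C\<^esub> y i) = e x \<oplus>\<^bsub>M\<^esub> e y"
    using le unfolding lin_map_def pm_add by blast
  have le3: "\<And>r x. r \<in> carrier R \<Longrightarrow> x \<in> P (a 0) \<Longrightarrow> e (\<lambda>i. r \<odot>\<^bsub>C\<^esub> x i) = r \<odot>\<^bsub>M\<^esub> e x"
    using le unfolding lin_map_def pm_smult by blast
  have L3: "lin_map R (pow_mod C (a 0)) M (\<lambda>x. e (\<beta> 0 x))"
    unfolding lin_map_def pm_add pm_smult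
  proof (intro conjI ballI)
    show "(\<lambda>x. e (\<beta> 0 x)) \<in> P (a 0) \<rightarrow> carrier M"
    proof (rule Pi_I)
      fix x assume "x \<in> P (a 0)" then show "e (\<beta> 0 x) \<in> carrier M" by (rule le1[OF linD1[OF lb]])
    qed
    fix x y assume xy: "x \<in> P (a 0)" "y \<in> P (a 0)"
    show "e (\<beta> 0 (\<lambda>i. x i \<oplus>\<^bsub>C\<^esub> y i)) = e (\<beta> 0 x) \<oplus>\<^bsub>M\<^esub> e (\<beta> 0 y)"
      unfolding linD2[OF lb xy] by (rule le2[OF linD1[OF lb xy(1)] linD1[OF lb xy(2)]])
  next
    fix r x assume rx: "r \<in> carrier R" "x \<in> P (a 0)"
    show "e (\<beta> 0 (\<lambda>i. r \<odot>\<^bsub>C\<^esub> x i)) = r \<odot>\<^bsub>M\<^esub> e (\<beta> 0 x)"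
      unfolding linD3[OF lb rx] by (rule le3[OF rx(1) linD1[OF lb rx(2)]])
  qed
  have L4: "(\<lambda>x. e (\<beta> 0 x)) ` P (a 0) = carrier M"
  proof (rule Set.set_eqI, rule iffI)
    fix y assume "y \<in> (\<lambda>x. e (\<beta> 0 x)) ` P (a 0)"
    then obtain x where x: "x \<in> P (a 0)" "y = e (\<beta> 0 x)" by (rule imageE) simp
    have "e (\<beta> 0 x) \<in> e ` P (a 0)" using linD1[OF lb x(1)] by (rule imageI)
    then show "y \<in> carrier M" using es x(2) by simp
  next
    fix y assume "y \<in> carrier M"
    then have "y \<in> e ` P (a 0)" using es by simp
    then obtain x where x: "x \<in> P (a 0)" "y = e x" by (rule imageE) simp
    then have "y = e (\<beta> 0 (\<alpha> 0 x))" using ba by simp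
    then show "y \<in> (\<lambda>x. e (\<beta> 0 x)) ` P (a 0)" by (rule image_eqI[OF _ linD1[OF la x(1)]])
  qed
  have L5: "{x \<in> P (a 0). e (\<beta> 0 x) = \<zero>\<^bsub>M\<^esub>} = (\<lambda>x. \<alpha> (1 - 1) (d 1 (\<beta> 1 x))) ` P (a 1)"
  proof (rule Set.set_eqI, rule iffI)
    fix x assume "x \<in> {x \<in> P (a 0). e (\<beta> 0 x) = \<zero>\<^bsub>M\<^esub>}"
    then have x: "x \<in> P (a 0)" and x0: "e (\<beta> 0 x) = \<zero>\<^bsub>M\<^esub>"
      unfolding mem_Collect_eq by (rule conjunct1, rule conjunct2)
    have bx: "\<beta> 0 x \<in> P (a 0)" using linD1[OF lb x] .
    then have "\<beta> 0 x \<in> {x \<in> P (a 0). e x = \<zero>\<^bsub>M\<^esub>}" unfolding mem_Collect_eq using x0 by (rule conjI)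
    then have "\<beta> 0 x \<in> d 1 ` P (a 1)" by (simp only: ek)
    then obtain y where y: "y \<in> P (a 1)" "\<beta> 0 x = d 1 y" by (rule imageE) simp
    have "x = \<alpha> 0 (\<beta> 0 x)" using ab[OF x] by simp
    also have "\<dots> = \<alpha> 0 (d 1 (\<beta> 1 (\<alpha> 1 y)))" using y(2) ba[OF y(1)] by simp
    finally have xe: "x = \<alpha> (1 - 1) (d 1 (\<beta> 1 (\<alpha> 1 y)))" by simp
    show "x \<in> (\<lambda>x. \<alpha> (1 - 1) (d 1 (\<beta> 1 x))) ` P (a 1)"
      by (rule image_eqI[where x="\<alpha> 1 y" and f="\<lambda>x. \<alpha> (1 - 1) (d 1 (\<beta> 1 x))", OF xe linD1[OF la y(1)]])
  next
    fix x assume "x \<in> (\<lambda>x. \<alpha> (1 - 1) (d 1 (\<beta> 1 x))) ` P (a 1)"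
    then obtain y where y0: "y \<in> P (a 1)" "x = \<alpha> (1 - 1) (d 1 (\<beta> 1 y))" by (rule imageE)
    then have y: "y \<in> P (a 1)" "x = \<alpha> 0 (d 1 (\<beta> 1 y))" by simp_all
    have by': "\<beta> 1 y \<in> P (a 1)" using linD1[OF lb y(1)] .
    have dz: "d 1 (\<beta> 1 y) \<in> P (a 0)" using linD1[OF ld[of 1] by'] by simp
    have x: "x \<in> P (a 0)" using linD1[OF la dz] y(2) by simp
    have "e (\<beta> 0 x) = e (d 1 (\<beta> 1 y))" using y(2) ba[OF dz] by simp
    also have "\<dots> = \<zero>\<^bsub>M\<^esub>" by (rule ed_zero[OF res by'])
    finally show "x \<in> {x \<in> P (a 0). e (\<beta> 0 x) = \<zero>\<^bsub>M\<^esub>}" unfolding mem_Collect_eq using x by (intro conjI)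
  qed
  show ?thesis unfolding res_iff using L1 L2 L3 L4 L5 by simp
qed

lemma lin_target: assumes "lin a b f" "\<And>x. x \<in> P a \<Longrightarrow> f x \<in> P b'" shows "lin a b' f"
  using assms unfolding lin_def by blast

lemma linM_restrict: assumes "lin_map R (pow_mod C a) M e" "b \<le> a" shows "lin_map R (pow_mod C b) M e"
proof -
  have sub: "P b \<subseteq> P a" using P_mono assms(2) by blast
  show ?thesis using assms(1) sub unfolding lin_map_def pm_add pm_smult Pi_def by blast
qed

lemma image_shrink: assumes f: "lin (Suc B) b f" and z: "\<And>c. c \<in> carrier C \<Longrightarrow> f (cinj C B c) = (\<lambda>i. \<zero>\<^bsub>C\<^esub>)"
  shows "f ` P B = f ` P (Suc B)"
proof (rule subset_antisym)
  have "P B \<subseteq> P (Suc B)" by (rule subsetI, erule P_mono) simp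
  then show "f ` P B \<subseteq> f ` P (Suc B)" by (rule image_mono)
  show "f ` P (Suc B) \<subseteq> f ` P B"
  proof (rule image_subsetI)
    fix y assume y: "y \<in> P (Suc B)"
    have t: "y(B := \<zero>\<^bsub>C\<^esub>) \<in> P B" by (rule decomp(2)[OF y])
    have yB: "y B \<in> carrier C" by (rule P_coord[OF y])
    have "f y = f (\<lambda>k. (y(B := \<zero>\<^bsub>C\<^esub>)) k \<oplus>\<^bsub>C\<^esub> cinj C B (y B) k)" by (rule arg_cong[where f=f, OF decomp(1)[OF y]])
    also have "\<dots> = (\<lambda>k. f (y(B := \<zero>\<^bsub>C\<^esub>)) k \<oplus>\<^bsub>C\<^esub> f (cinj C B (y B)) k)"
      by (rule linD2[OF f P_mono[OF t] inj_P[OF yB]]) simp_all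
    also have "\<dots> = f (y(B := \<zero>\<^bsub>C\<^esub>))"
    proof
      fix k
      have "f (y(B := \<zero>\<^bsub>C\<^esub>)) k \<in> carrier C" by (rule P_coord[OF linD1[OF f P_mono[OF t]]]) simp
      then show "f (y(B := \<zero>\<^bsub>C\<^esub>)) k \<oplus>\<^bsub>C\<^esub> f (cinj C B (y B)) k = f (y(B := \<zero>\<^bsub>C\<^esub>)) k"
        using z[OF yB] by simp
    qed
    finally show "f y \<in> f ` P B" using t by simp
  qed
qed

lemma imageM_shrink: assumes M: "abelian_group M" and e: "lin_map R (pow_mod C (Suc B)) M e"
  and z: "\<And>c. c \<in> carrier C \<Longrightarrow> e (cinj C B c) = \<zero>\<^bsub>M\<^esub>"
  shows "e ` P B = e ` P (Suc B)"
proof (rule subset_antisym)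
  have "P B \<subseteq> P (Suc B)" by (rule subsetI, erule P_mono) simp
  then show "e ` P B \<subseteq> e ` P (Suc B)" by (rule image_mono)
  have e1: "\<And>x. x \<in> P (Suc B) \<Longrightarrow> e x \<in> carrier M" using e unfolding lin_map_def by blast
  have e2: "\<And>x y. x \<in> P (Suc B) \<Longrightarrow> y \<in> P (Suc B) \<Longrightarrow> e (\<lambda>i. x i \<oplus>\<^bsub>C\<^esub> y i) = e x \<oplus>\<^bsub>M\<^esub> e y"
    using e unfolding lin_map_def pm_add by blast
  show "e ` P (Suc B) \<subseteq> e ` P B"
  proof (rule image_subsetI)
    fix y assume y: "y \<in> P (Suc B)"
    have t: "y(B := \<zero>\<^bsub>C\<^esub>) \<in> P B" by (rule decomp(2)[OF y])
    have yB: "y B \<in> carrier C" by (rule P_coord[OF y])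
    have "e y = e (\<lambda>k. (y(B := \<zero>\<^bsub>C\<^esub>)) k \<oplus>\<^bsub>C\<^esub> cinj C B (y B) k)" by (rule arg_cong[where f=e, OF decomp(1)[OF y]])
    also have "\<dots> = e (y(B := \<zero>\<^bsub>C\<^esub>)) \<oplus>\<^bsub>M\<^esub> e (cinj C B (y B))"
      by (rule e2[OF P_mono[OF t] inj_P[OF yB]]) simp_all
    also have "\<dots> = e (y(B := \<zero>\<^bsub>C\<^esub>))"
      using z[OF yB] e1[OF P_mono[OF t]] abelian_monoid.r_zero[OF abelian_group.axioms(1)[OF M]] by simp
    finally show "e y \<in> e ` P B" using t by simp
  qed
qed

lemma trunc_res:
  assumes res: "pow_resolution R C M a d e" and Mg: "abelian_group M" and n: "n \<ge> 1"
    and aA: "a n = Suc A" and aB: "a (n - 1) = Suc B" and u: "u \<in> carrier R" "u \<notin> m"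
    and i1: "\<And>x. x \<in> P (Suc A) \<Longrightarrow> d n x B = u \<odot>\<^bsub>C\<^esub> x A"
    and i2: "\<And>c. c \<in> carrier C \<Longrightarrow> d n (cinj C A c) = cinj C B (u \<odot>\<^bsub>C\<^esub> c)"
  shows "pow_resolution R C M (a(n := A, n - 1 := B)) d e"
proof -
  define a' where "a' = a(n := A, n - 1 := B)"
  have nn: "n \<noteq> n - 1" using n by simp
  have a'n: "a' n = A" unfolding a'_def using nn by simp
  have a'n1: "a' (n - 1) = B" unfolding a'_def by simp
  have a'o: "\<And>k. k \<noteq> n \<Longrightarrow> k \<noteq> n - 1 \<Longrightarrow> a' k = a k" unfolding a'_def by simp
  note RI = res[unfolded res_iff]
  have ld: "\<And>k. k \<ge> 1 \<Longrightarrow> lin (a k) (a (k - 1)) (d k)" using conjunct1[OF RI] by simp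
  have ker: "\<And>k. k \<ge> 1 \<Longrightarrow> {x \<in> P (a k). d k x = (\<lambda>i. \<zero>\<^bsub>C\<^esub>)} = d (Suc k) ` P (a (Suc k))"
    using conjunct1[OF conjunct2[OF RI]] by simp
  have le: "lin_map R (pow_mod C (a 0)) M e" using conjunct1[OF conjunct2[OF conjunct2[OF RI]]] .
  have es: "e ` P (a 0) = carrier M" using conjunct1[OF conjunct2[OF conjunct2[OF conjunct2[OF RI]]]] .
  have ek: "{x \<in> P (a 0). e x = \<zero>\<^bsub>M\<^esub>} = d 1 ` P (a 1)"
    using conjunct2[OF conjunct2[OF conjunct2[OF conjunct2[OF RI]]]] .
  have uU: "u \<in> Units R" using units_m u by blast
  define ui where "ui = inv\<^bsub>R\<^esub> u"
  have ui: "ui \<in> carrier R" "u \<otimes>\<^bsub>R\<^esub> ui = \<one>\<^bsub>R\<^esub>" "ui \<otimes>\<^bsub>R\<^esub> u = \<one>\<^bsub>R\<^esub>"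
    using uU unfolding ui_def by auto
  have ucancel: "\<And>c. c \<in> carrier C \<Longrightarrow> u \<odot>\<^bsub>C\<^esub> c = \<zero>\<^bsub>C\<^esub> \<Longrightarrow> c = \<zero>\<^bsub>C\<^esub>"
  proof -
    fix c assume c: "c \<in> carrier C" "u \<odot>\<^bsub>C\<^esub> c = \<zero>\<^bsub>C\<^esub>"
    have "c = (ui \<otimes>\<^bsub>R\<^esub> u) \<odot>\<^bsub>C\<^esub> c" using ui c by simp
    also have "\<dots> = ui \<odot>\<^bsub>C\<^esub> (u \<odot>\<^bsub>C\<^esub> c)" using smult_assoc1[OF ui(1) u(1) c(1)] .
    finally show "c = \<zero>\<^bsub>C\<^esub>" using c ui by simp
  qed
  have ldn: "lin (Suc A) (Suc B) (d n)" using ld[OF n] aA aB by simp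
  have F1: "\<And>x. x \<in> P A \<Longrightarrow> d n x \<in> P B"
  proof -
    fix x assume x: "x \<in> P A"
    have xS: "x \<in> P (Suc A)" by (rule P_mono[OF x]) simp
    have "x A = \<zero>\<^bsub>C\<^esub>" using x unfolding P_iff by simp
    then have "d n x B = \<zero>\<^bsub>C\<^esub>" using i1[OF xS] u by simp
    then show "d n x \<in> P B" by (rule P_shrink[OF linD1[OF ldn xS]])
  qed
  have F6: "\<And>x. x \<in> P (Suc A) \<Longrightarrow> d n x B = \<zero>\<^bsub>C\<^esub> \<Longrightarrow> x \<in> P A"
  proof -
    fix x assume x: "x \<in> P (Suc A)" "d n x B = \<zero>\<^bsub>C\<^esub>"
    have "u \<odot>\<^bsub>C\<^esub> x A = \<zero>\<^bsub>C\<^esub>" using i1[OF x(1)] x(2) by simp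
    then have "x A = \<zero>\<^bsub>C\<^esub>" by (rule ucancel[OF P_coord[OF x(1)]])
    then show "x \<in> P A" by (rule P_shrink[OF x(1)])
  qed
  have F2: "\<And>z. z \<in> P (a (Suc n)) \<Longrightarrow> d (Suc n) z \<in> P A"
  proof -
    fix z assume z: "z \<in> P (a (Suc n))"
    have w: "d (Suc n) z \<in> P (Suc A)" using linD1[OF ld[of "Suc n"] z] aA by simp
    have "d n (d (Suc n) z) = (\<lambda>i. \<zero>\<^bsub>C\<^esub>)" by (rule dd_zero[OF res n z])
    then have "d n (d (Suc n) z) B = \<zero>\<^bsub>C\<^esub>" by simp
    then show "d (Suc n) z \<in> P A" by (rule F6[OF w])
  qed
  have cB: "\<And>c. c \<in> carrier C \<Longrightarrow> cinj C B c = d n (cinj C A (ui \<odot>\<^bsub>C\<^esub> c))"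
  proof -
    fix c assume c: "c \<in> carrier C"
    have "u \<odot>\<^bsub>C\<^esub> (ui \<odot>\<^bsub>C\<^esub> c) = (u \<otimes>\<^bsub>R\<^esub> ui) \<odot>\<^bsub>C\<^esub> c" using smult_assoc1[OF u(1) ui(1) c] by simp
    then have "u \<odot>\<^bsub>C\<^esub> (ui \<odot>\<^bsub>C\<^esub> c) = c" using ui c by simp
    then show "cinj C B c = d n (cinj C A (ui \<odot>\<^bsub>C\<^esub> c))" using i2[of "ui \<odot>\<^bsub>C\<^esub> c"] ui c by simp
  qed
  have cAP: "\<And>c. c \<in> carrier C \<Longrightarrow> cinj C A (ui \<odot>\<^bsub>C\<^esub> c) \<in> P (Suc A)"
    using ui(1) by (intro inj_P) simp_all
  have F3: "\<And>c. n \<ge> 2 \<Longrightarrow> c \<in> carrier C \<Longrightarrow> d (n - 1) (cinj C B c) = (\<lambda>i. \<zero>\<^bsub>C\<^esub>)"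
  proof -
    fix c assume n2: "n \<ge> 2" and c: "c \<in> carrier C"
    have n1: "n - 1 \<ge> 1" using n2 by simp
    have sn: "Suc (n - 1) = n" using n by simp
    have zP: "cinj C A (ui \<odot>\<^bsub>C\<^esub> c) \<in> P (a (Suc (n - 1)))" using cAP[OF c] sn aA by simp
    have "d (n - 1) (d (Suc (n - 1)) (cinj C A (ui \<odot>\<^bsub>C\<^esub> c))) = (\<lambda>i. \<zero>\<^bsub>C\<^esub>)"
      by (rule dd_zero[OF res n1 zP])
    then show "d (n - 1) (cinj C B c) = (\<lambda>i. \<zero>\<^bsub>C\<^esub>)" using cB[OF c] sn by simp
  qed
  have F4: "\<And>c. n = 1 \<Longrightarrow> c \<in> carrier C \<Longrightarrow> e (cinj C B c) = \<zero>\<^bsub>M\<^esub>"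
  proof -
    fix c assume n1: "n = 1" and c: "c \<in> carrier C"
    have zP: "cinj C A (ui \<odot>\<^bsub>C\<^esub> c) \<in> P (a 1)" using cAP[OF c] n1 aA by simp
    have "e (d 1 (cinj C A (ui \<odot>\<^bsub>C\<^esub> c))) = \<zero>\<^bsub>M\<^esub>" by (rule ed_zero[OF res zP])
    then show "e (cinj C B c) = \<zero>\<^bsub>M\<^esub>" using cB[OF c] n1 by simp
  qed
  have P1: "\<forall>k\<ge>1. lin (a' k) (a' (k - 1)) (d k)"
  proof (intro allI impI)
    fix k :: nat assume k: "k \<ge> 1"
    show "lin (a' k) (a' (k - 1)) (d k)"
    proof (cases "k = n")
      case True
      have "lin A (Suc B) (d n)" by (rule lin_restrict[OF ldn]) simp
      then have "lin A B (d n)" by (rule lin_target) (rule F1)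
      then show ?thesis using True a'n a'n1 by simp
    next
      case kn: False
      show ?thesis
      proof (cases "k = Suc n")
        case True
        have "lin (a (Suc n)) A (d (Suc n))" by (rule lin_target[OF ld[of "Suc n"]]) (simp_all add: F2)
        then show ?thesis using True a'n a'o[of "Suc n"] by simp
      next
        case ksn: False
        show ?thesis
        proof (cases "k = n - 1")
          case True
          then have n2: "n \<ge> 2" using k n by simp
          have "lin (Suc B) (a (n - 1 - 1)) (d (n - 1))" using ld[of "n - 1"] n2 aB by simp
          then have "lin B (a (n - 1 - 1)) (d (n - 1))" by (rule lin_restrict) simp
          moreover have "a' (n - 1 - 1) = a (n - 1 - 1)" using n2 by (intro a'o) simp_all
          ultimately show ?thesis using True a'n1 by simp
        next
          case False
          have "a' k = a k" using kn False by (rule a'o)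
          moreover have "a' (k - 1) = a (k - 1)" using kn ksn False k by (intro a'o) simp_all
          ultimately show ?thesis using ld[OF k] by simp
        qed
      qed
    qed
  qed
  have P2: "\<forall>k\<ge>1. {x \<in> P (a' k). d k x = (\<lambda>i. \<zero>\<^bsub>C\<^esub>)} = d (Suc k) ` P (a' (Suc k))"
  proof (intro allI impI)
    fix k :: nat assume k: "k \<ge> 1"
    show "{x \<in> P (a' k). d k x = (\<lambda>i. \<zero>\<^bsub>C\<^esub>)} = d (Suc k) ` P (a' (Suc k))"
    proof (cases "k = n")
      case True
      have as: "a' (Suc n) = a (Suc n)" by (rule a'o) simp_all
      have "{x \<in> P A. d n x = (\<lambda>i. \<zero>\<^bsub>C\<^esub>)} = d (Suc n) ` P (a (Suc n))"
      proof (rule subset_antisym)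
        show "{x \<in> P A. d n x = (\<lambda>i. \<zero>\<^bsub>C\<^esub>)} \<subseteq> d (Suc n) ` P (a (Suc n))"
        proof (rule subsetI)
          fix x assume "x \<in> {x \<in> P A. d n x = (\<lambda>i. \<zero>\<^bsub>C\<^esub>)}"
          then have x: "x \<in> P A" and x0: "d n x = (\<lambda>i. \<zero>\<^bsub>C\<^esub>)" by simp_all
          have "x \<in> P (a n)" using P_mono[OF x] aA by simp
          then have "x \<in> {x \<in> P (a n). d n x = (\<lambda>i. \<zero>\<^bsub>C\<^esub>)}" using x0 by simp
          then show "x \<in> d (Suc n) ` P (a (Suc n))" by (simp only: ker[OF n])
        qed
        show "d (Suc n) ` P (a (Suc n)) \<subseteq> {x \<in> P A. d n x = (\<lambda>i. \<zero>\<^bsub>C\<^esub>)}"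
        proof (rule image_subsetI)
          fix z assume z: "z \<in> P (a (Suc n))"
          show "d (Suc n) z \<in> {x \<in> P A. d n x = (\<lambda>i. \<zero>\<^bsub>C\<^esub>)}"
            using F2[OF z] dd_zero[OF res n z] by simp
        qed
      qed
      then show ?thesis using True as a'n by simp
    next
      case kn: False
      show ?thesis
      proof (cases "k = n - 1")
        case True
        then have n2: "n \<ge> 2" using k n by simp
        have sn: "Suc (n - 1) = n" using n by simp
        have n1: "n - 1 \<ge> 1" using n2 by simp
        have "{y \<in> P B. d (n - 1) y = (\<lambda>i. \<zero>\<^bsub>C\<^esub>)} = d n ` P A"
        proof (rule subset_antisym)
          show "{y \<in> P B. d (n - 1) y = (\<lambda>i. \<zero>\<^bsub>C\<^esub>)} \<subseteq> d n ` P A"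
          proof (rule subsetI)
            fix y assume "y \<in> {y \<in> P B. d (n - 1) y = (\<lambda>i. \<zero>\<^bsub>C\<^esub>)}"
            then have y: "y \<in> P B" and y0: "d (n - 1) y = (\<lambda>i. \<zero>\<^bsub>C\<^esub>)" by simp_all
            have "y \<in> P (a (n - 1))" using P_mono[OF y] aB by simp
            then have "y \<in> {x \<in> P (a (n - 1)). d (n - 1) x = (\<lambda>i. \<zero>\<^bsub>C\<^esub>)}" using y0 by simp
            then have "y \<in> d (Suc (n - 1)) ` P (a (Suc (n - 1)))" by (simp only: ker[OF n1])
            then have "y \<in> d n ` P (Suc A)" using sn aA by simp
            then obtain x where x: "x \<in> P (Suc A)" "y = d n x" by (rule imageE) simp
            have "d n x B = \<zero>\<^bsub>C\<^esub>" using x(2) y unfolding P_iff by simp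
            then have "x \<in> P A" by (rule F6[OF x(1)])
            then show "y \<in> d n ` P A" using x(2) by simp
          qed
          show "d n ` P A \<subseteq> {y \<in> P B. d (n - 1) y = (\<lambda>i. \<zero>\<^bsub>C\<^esub>)}"
          proof (rule image_subsetI)
            fix x assume x: "x \<in> P A"
            have xS: "x \<in> P (a (Suc (n - 1)))" using P_mono[OF x] sn aA by simp
            have "d (n - 1) (d (Suc (n - 1)) x) = (\<lambda>i. \<zero>\<^bsub>C\<^esub>)" by (rule dd_zero[OF res n1 xS])
            then show "d n x \<in> {y \<in> P B. d (n - 1) y = (\<lambda>i. \<zero>\<^bsub>C\<^esub>)}" using F1[OF x] sn by simp
          qed
        qed
        then show ?thesis using True sn a'n a'n1 by simp
      next
        case kn1: False
        show ?thesis
        proof (cases "Suc k = n - 1")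
          case True
          then have n3: "n \<ge> 3" using k by simp
          have ak: "a' k = a k" using kn kn1 by (rule a'o)
          have n1: "n - 1 \<ge> 1" using n3 by simp
          have ldn1: "lin (Suc B) (a (n - 1 - 1)) (d (n - 1))" using ld[OF n1] aB by simp
          have "d (n - 1) ` P B = d (n - 1) ` P (Suc B)"
            by (rule image_shrink[OF ldn1]) (rule F3, use n3 in simp_all)
          then have "d (Suc k) ` P (a' (Suc k)) = d (Suc k) ` P (a (Suc k))" using True a'n1 aB by simp
          then show ?thesis using ker[OF k] ak by simp
        next
          case False
          have "a' k = a k" using kn kn1 by (rule a'o)
          moreover have "a' (Suc k) = a (Suc k)" using False kn kn1 k n by (intro a'o) simp_all
          ultimately show ?thesis using ker[OF k] by simp
        qed
      qed
    qed
  qed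
  have P345: "lin_map R (pow_mod C (a' 0)) M e \<and> e ` P (a' 0) = carrier M \<and>
      {x \<in> P (a' 0). e x = \<zero>\<^bsub>M\<^esub>} = d 1 ` P (a' 1)"
  proof (cases "n = 1")
    case True
    have a'0: "a' 0 = B" using a'n1 True by simp
    have a'1: "a' 1 = A" using a'n True by simp
    have a0: "a 0 = Suc B" using aB True by simp
    have a1: "a 1 = Suc A" using aA True by simp
    have le': "lin_map R (pow_mod C (Suc B)) M e" using le a0 by simp
    have L3: "lin_map R (pow_mod C B) M e" by (rule linM_restrict[OF le']) simp
    have "e ` P B = e ` P (Suc B)" by (rule imageM_shrink[OF Mg le']) (rule F4[OF True])
    then have L4: "e ` P B = carrier M" using es a0 by simp
    have L5: "{y \<in> P B. e y = \<zero>\<^bsub>M\<^esub>} = d 1 ` P A"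
    proof (rule subset_antisym)
      show "{y \<in> P B. e y = \<zero>\<^bsub>M\<^esub>} \<subseteq> d 1 ` P A"
      proof (rule subsetI)
        fix y assume "y \<in> {y \<in> P B. e y = \<zero>\<^bsub>M\<^esub>}"
        then have y: "y \<in> P B" and y0: "e y = \<zero>\<^bsub>M\<^esub>" by simp_all
        have "y \<in> P (a 0)" using P_mono[OF y] a0 by simp
        then have "y \<in> {x \<in> P (a 0). e x = \<zero>\<^bsub>M\<^esub>}" using y0 by simp
        then have "y \<in> d 1 ` P (a 1)" by (simp only: ek)
        then have "y \<in> d n ` P (Suc A)" using a1 True by simp
        then obtain x where x: "x \<in> P (Suc A)" "y = d n x" by (rule imageE) simp
        have "d n x B = \<zero>\<^bsub>C\<^esub>" using x(2) y unfolding P_iff by simp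
        then have "x \<in> P A" by (rule F6[OF x(1)])
        then show "y \<in> d 1 ` P A" using x(2) True by simp
      qed
      show "d 1 ` P A \<subseteq> {y \<in> P B. e y = \<zero>\<^bsub>M\<^esub>}"
      proof (rule image_subsetI)
        fix x assume x: "x \<in> P A"
        have xS: "x \<in> P (a 1)" using P_mono[OF x] a1 by simp
        have "e (d 1 x) = \<zero>\<^bsub>M\<^esub>" by (rule ed_zero[OF res xS])
        then show "d 1 x \<in> {y \<in> P B. e y = \<zero>\<^bsub>M\<^esub>}" using F1[OF x] True by simp
      qed
    qed
    show ?thesis using L3 L4 L5 a'0 a'1 by simp
  next
    case n1: False
    have a'0: "a' 0 = a 0" using n1 n by (intro a'o) simp_all
    show ?thesis
    proof (cases "n = 2")
      case True
      have a'1: "a' 1 = B" using a'n1 True by simp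
      have ld1: "lin (Suc B) (a 0) (d 1)" using ld[of 1] aB True by simp
      have "d 1 ` P B = d 1 ` P (Suc B)"
        by (rule image_shrink[OF ld1]) (use F3[of _] True in simp)
      then have "d 1 ` P (a' 1) = d 1 ` P (a 1)" using a'1 aB True by simp
      then show ?thesis using le es ek a'0 by simp
    next
      case False
      have a'1: "a' 1 = a 1" using False n1 n by (intro a'o) simp_all
      show ?thesis using le es ek a'0 a'1 by simp
    qed
  qed
  show ?thesis unfolding a'_def[symmetric] res_iff using P1 P2 P345 by simp
qed

definition sw :: "nat \<Rightarrow> nat \<Rightarrow> (nat \<Rightarrow> 'c) \<Rightarrow> nat \<Rightarrow> 'c" where
  "sw k l x = (\<lambda>t. x (if t = k then l else if t = l then k else t))"

lemma sw_P: assumes "k < a" "l < a" "x \<in> P a" shows "sw k l x \<in> P a"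
  using assms unfolding P_iff sw_def by auto

lemma sw_lin: assumes "k < a" "l < a" shows "lin a a (sw k l)"
  unfolding lin_def
proof (intro conjI ballI)
  show "sw k l \<in> P a \<rightarrow> P a" using sw_P[OF assms] by blast
qed (simp_all add: sw_def)

lemma sw_sw: "sw k l (sw k l x) = x"
  unfolding sw_def by auto

lemma sw_cinj: "sw k l (cinj C l c) = cinj C k c"
  unfolding sw_def cinj_def by auto

lemma iso_two: assumes nn: "n \<noteq> n'"
  and f1: "lin (a n) (a n) f1" "lin (a n) (a n) g1" "\<And>x. x \<in> P (a n) \<Longrightarrow> g1 (f1 x) = x" "\<And>x. x \<in> P (a n) \<Longrightarrow> f1 (g1 x) = x"
  and f2: "lin (a n') (a n') f2" "lin (a n') (a n') g2" "\<And>x. x \<in> P (a n') \<Longrightarrow> g2 (f2 x) = x" "\<And>x. x \<in> P (a n') \<Longrightarrow> f2 (g2 x) = x"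
  shows "iso_fam a (\<lambda>k. if k = n then f1 else if k = n' then f2 else (\<lambda>x. x))
                   (\<lambda>k. if k = n then g1 else if k = n' then g2 else (\<lambda>x. x))"
  unfolding iso_fam_def
proof (intro allI)
  fix k
  show "lin (a k) (a k) (if k = n then f1 else if k = n' then f2 else (\<lambda>x. x)) \<and>
        lin (a k) (a k) (if k = n then g1 else if k = n' then g2 else (\<lambda>x. x)) \<and>
        (\<forall>x\<in>P (a k). (if k = n then g1 else if k = n' then g2 else (\<lambda>x. x))
            ((if k = n then f1 else if k = n' then f2 else (\<lambda>x. x)) x) = x \<and>
          (if k = n then f1 else if k = n' then f2 else (\<lambda>x. x))
            ((if k = n then g1 else if k = n' then g2 else (\<lambda>x. x)) x) = x)"
  proof (cases "k = n")
    case True then show ?thesis using f1 by simp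
  next
    case False
    show ?thesis
    proof (cases "k = n'")
      case True then show ?thesis using f2 False by simp
    next
      case False2: False
      have "lin (a k) (a k) (\<lambda>x. x)" by (rule lin_id) simp
      then show ?thesis using False False2 by simp
    qed
  qed
qed

lemma swap_res:
  assumes res: "pow_resolution R C M a d e" and n: "n \<ge> 1" and aA: "a n = Suc A" and aB: "a (n - 1) = Suc B"
    and ij: "i < a n" "j < a (n - 1)"
  shows "pow_resolution R C M a (\<lambda>k x. (if k - 1 = n then sw i A else if k - 1 = n - 1 then sw j B else (\<lambda>x. x))
              (d k ((if k = n then sw i A else if k = n - 1 then sw j B else (\<lambda>x. x)) x)))
           (\<lambda>x. e ((if 0 = n then sw i A else if 0 = n - 1 then sw j B else (\<lambda>x. x)) x))"
proof (rule conj_res[OF res iso_two])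
  show "n \<noteq> n - 1" using n by simp
  have iA: "i < a n" "A < a n" using ij aA by auto
  have jB: "j < a (n - 1)" "B < a (n - 1)" using ij aB by auto
  show "lin (a n) (a n) (sw i A)" "lin (a n) (a n) (sw i A)" using sw_lin[OF iA] by auto
  show "lin (a (n - 1)) (a (n - 1)) (sw j B)" "lin (a (n - 1)) (a (n - 1)) (sw j B)" using sw_lin[OF jB] by auto
qed (simp_all add: sw_sw)

definition Gm :: "nat \<Rightarrow> nat \<Rightarrow> ((nat \<Rightarrow> 'c) \<Rightarrow> nat \<Rightarrow> 'c) \<Rightarrow> 'a \<Rightarrow> (nat \<Rightarrow> 'c) \<Rightarrow> nat \<Rightarrow> 'c" where
  "Gm A B Dm s x = (\<lambda>i. x i \<oplus>\<^bsub>C\<^esub> cinj C A (s \<odot>\<^bsub>C\<^esub> Dm (x(A := \<zero>\<^bsub>C\<^esub>)) B) i)"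

definition Bm :: "nat \<Rightarrow> nat \<Rightarrow> ((nat \<Rightarrow> 'c) \<Rightarrow> nat \<Rightarrow> 'c) \<Rightarrow> 'a \<Rightarrow> (nat \<Rightarrow> 'c) \<Rightarrow> nat \<Rightarrow> 'c" where
  "Bm A B Dm s y = (\<lambda>i. y i \<oplus>\<^bsub>C\<^esub> ((Dm (cinj C A (s \<odot>\<^bsub>C\<^esub> y B)))(B := \<zero>\<^bsub>C\<^esub>)) i)"

lemma tr_lin: "lin a a (\<lambda>x. x(A := \<zero>\<^bsub>C\<^esub>))"
  unfolding lin_def
proof (intro conjI ballI)
  show "(\<lambda>x. x(A := \<zero>\<^bsub>C\<^esub>)) \<in> P a \<rightarrow> P a" by (auto simp: P_iff)
  fix x y assume "x \<in> P a" "y \<in> P a"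
  show "(\<lambda>i. x i \<oplus>\<^bsub>C\<^esub> y i)(A := \<zero>\<^bsub>C\<^esub>) = (\<lambda>i. (x(A := \<zero>\<^bsub>C\<^esub>)) i \<oplus>\<^bsub>C\<^esub> (y(A := \<zero>\<^bsub>C\<^esub>)) i)"
    by (auto simp: fun_eq_iff)
next
  fix r x assume "r \<in> carrier R" "x \<in> P a"
  then show "(\<lambda>i. r \<odot>\<^bsub>C\<^esub> x i)(A := \<zero>\<^bsub>C\<^esub>) = (\<lambda>i. r \<odot>\<^bsub>C\<^esub> (x(A := \<zero>\<^bsub>C\<^esub>)) i)"
    by (auto simp: fun_eq_iff)
qed

lemma Gm_lin: assumes Dm: "lin (Suc A) (Suc B) Dm" and s: "s \<in> carrier R"
  shows "lin (Suc A) (Suc A) (Gm A B Dm s)"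
proof -
  have g: "lin (Suc A) (Suc B) (\<lambda>x. Dm (x(A := \<zero>\<^bsub>C\<^esub>)))" by (rule lin_comp[OF tr_lin Dm])
  have "lin (Suc A) (Suc A) (\<lambda>x i. x i \<oplus>\<^bsub>C\<^esub> cinj C A (s \<odot>\<^bsub>C\<^esub> Dm (x(A := \<zero>\<^bsub>C\<^esub>)) B) i)"
    by (rule lin_add[OF lin_id lin_scale_coord[OF g s]]) simp_all
  then show ?thesis unfolding Gm_def by simp
qed

lemma Bm_lin: assumes Dm: "lin (Suc A) (Suc B) Dm" and s: "s \<in> carrier R"
  shows "lin (Suc B) (Suc B) (Bm A B Dm s)"
proof -
  have g1: "lin (Suc B) (Suc A) (\<lambda>y. cinj C A (s \<odot>\<^bsub>C\<^esub> y B))"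
    using lin_scale_coord[OF lin_id[of "Suc B" "Suc B"] s, of A "Suc A" B] by simp
  have g: "lin (Suc B) (Suc B) (\<lambda>y. (Dm (cinj C A (s \<odot>\<^bsub>C\<^esub> y B)))(B := \<zero>\<^bsub>C\<^esub>))"
    by (rule lin_comp[OF lin_comp[OF g1 Dm] tr_lin])
  have "lin (Suc B) (Suc B) (\<lambda>y i. y i \<oplus>\<^bsub>C\<^esub> ((Dm (cinj C A (s \<odot>\<^bsub>C\<^esub> y B)))(B := \<zero>\<^bsub>C\<^esub>)) i)"
    by (rule lin_add[OF lin_id g]) simp
  then show ?thesis unfolding Bm_def by simp
qed

lemma Gm_tr: assumes "x \<in> P (Suc A)"
  shows "(Gm A B Dm s x)(A := \<zero>\<^bsub>C\<^esub>) = x(A := \<zero>\<^bsub>C\<^esub>)"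
proof
  fix i show "((Gm A B Dm s x)(A := \<zero>\<^bsub>C\<^esub>)) i = (x(A := \<zero>\<^bsub>C\<^esub>)) i"
    using P_coord[OF assms, of i] unfolding Gm_def cinj_def by simp
qed

lemma Gm_inv: assumes Dm: "lin (Suc A) (Suc B) Dm" and s: "s \<in> carrier R" "s' \<in> carrier R"
  and ss: "s' \<oplus>\<^bsub>R\<^esub> s = \<zero>\<^bsub>R\<^esub>" and x: "x \<in> P (Suc A)"
  shows "Gm A B Dm s' (Gm A B Dm s x) = x"
proof
  fix i
  have t: "x(A := \<zero>\<^bsub>C\<^esub>) \<in> P (Suc A)" using P_mono[OF decomp(2)[OF x]] by simp
  define r where "r = Dm (x(A := \<zero>\<^bsub>C\<^esub>)) B"
  have r: "r \<in> carrier C" unfolding r_def by (rule P_coord[OF linD1[OF Dm t]])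
  have xi: "x i \<in> carrier C" by (rule P_coord[OF x])
  have "Gm A B Dm s' (Gm A B Dm s x) i = (x i \<oplus>\<^bsub>C\<^esub> cinj C A (s \<odot>\<^bsub>C\<^esub> r) i) \<oplus>\<^bsub>C\<^esub> cinj C A (s' \<odot>\<^bsub>C\<^esub> r) i"
    unfolding Gm_def[of A B Dm s'] Gm_tr[OF x] r_def by (simp add: Gm_def r_def)
  also have "\<dots> = x i"
  proof (cases "i = A")
    case True
    have "(x i \<oplus>\<^bsub>C\<^esub> s \<odot>\<^bsub>C\<^esub> r) \<oplus>\<^bsub>C\<^esub> s' \<odot>\<^bsub>C\<^esub> r = x i \<oplus>\<^bsub>C\<^esub> (s' \<oplus>\<^bsub>R\<^esub> s) \<odot>\<^bsub>C\<^esub> r"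
      using xi r s by (simp add: smult_l_distr M.a_ac)
    then show ?thesis using True ss xi r by (simp add: cinj_def)
  next
    case False then show ?thesis using xi by (simp add: cinj_def)
  qed
  finally show "Gm A B Dm s' (Gm A B Dm s x) i = x i" .
qed

lemma Bm_B: assumes "y \<in> P (Suc B)" shows "Bm A B Dm s y B = y B"
  using P_coord[OF assms, of B] unfolding Bm_def by simp

lemma Bm_inv: assumes Dm: "lin (Suc A) (Suc B) Dm" and s: "s \<in> carrier R" "s' \<in> carrier R"
  and ss: "s' \<oplus>\<^bsub>R\<^esub> s = \<zero>\<^bsub>R\<^esub>" and y: "y \<in> P (Suc B)"
  shows "Bm A B Dm s' (Bm A B Dm s y) = y"
proof
  fix i
  have yB: "y B \<in> carrier C" by (rule P_coord[OF y])
  have yi: "y i \<in> carrier C" by (rule P_coord[OF y])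
  have c1: "s \<odot>\<^bsub>C\<^esub> y B \<in> carrier C" "s' \<odot>\<^bsub>C\<^esub> y B \<in> carrier C" using s yB by auto
  have P1: "cinj C A (s \<odot>\<^bsub>C\<^esub> y B) \<in> P (Suc A)" "cinj C A (s' \<odot>\<^bsub>C\<^esub> y B) \<in> P (Suc A)"
    using inj_P[OF c1(1)] inj_P[OF c1(2)] by auto
  have d1: "Dm (cinj C A (s \<odot>\<^bsub>C\<^esub> y B)) i \<in> carrier C" "Dm (cinj C A (s' \<odot>\<^bsub>C\<^esub> y B)) i \<in> carrier C"
    using P_coord[OF linD1[OF Dm P1(1)]] P_coord[OF linD1[OF Dm P1(2)]] by auto
  have sum0: "Dm (cinj C A (s \<odot>\<^bsub>C\<^esub> y B)) i \<oplus>\<^bsub>C\<^esub> Dm (cinj C A (s' \<odot>\<^bsub>C\<^esub> y B)) i = \<zero>\<^bsub>C\<^esub>"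
  proof -
    have "Dm (cinj C A (s \<odot>\<^bsub>C\<^esub> y B)) i \<oplus>\<^bsub>C\<^esub> Dm (cinj C A (s' \<odot>\<^bsub>C\<^esub> y B)) i =
          Dm (\<lambda>k. cinj C A (s \<odot>\<^bsub>C\<^esub> y B) k \<oplus>\<^bsub>C\<^esub> cinj C A (s' \<odot>\<^bsub>C\<^esub> y B) k) i"
      using padd_at[OF Dm P1] by simp
    also have "(\<lambda>k. cinj C A (s \<odot>\<^bsub>C\<^esub> y B) k \<oplus>\<^bsub>C\<^esub> cinj C A (s' \<odot>\<^bsub>C\<^esub> y B) k) = (\<lambda>k. \<zero>\<^bsub>C\<^esub>)"
    proof
      fix k
      have "s \<odot>\<^bsub>C\<^esub> y B \<oplus>\<^bsub>C\<^esub> s' \<odot>\<^bsub>C\<^esub> y B = (s' \<oplus>\<^bsub>R\<^esub> s) \<odot>\<^bsub>C\<^esub> y B"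
        using s yB by (simp add: smult_l_distr M.a_comm)
      then show "cinj C A (s \<odot>\<^bsub>C\<^esub> y B) k \<oplus>\<^bsub>C\<^esub> cinj C A (s' \<odot>\<^bsub>C\<^esub> y B) k = \<zero>\<^bsub>C\<^esub>"
        using ss yB by (simp add: cinj_def)
    qed
    also have "Dm (\<lambda>k. \<zero>\<^bsub>C\<^esub>) i = \<zero>\<^bsub>C\<^esub>" using lin_zero[OF Dm] by simp
    finally show ?thesis .
  qed
  have "Bm A B Dm s' (Bm A B Dm s y) i = (y i \<oplus>\<^bsub>C\<^esub> ((Dm (cinj C A (s \<odot>\<^bsub>C\<^esub> y B)))(B := \<zero>\<^bsub>C\<^esub>)) i)
        \<oplus>\<^bsub>C\<^esub> ((Dm (cinj C A (s' \<odot>\<^bsub>C\<^esub> y B)))(B := \<zero>\<^bsub>C\<^esub>)) i"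
    unfolding Bm_def[of A B Dm s'] Bm_B[OF y] by (simp add: Bm_def)
  also have "\<dots> = y i"
  proof (cases "i = B")
    case True then show ?thesis using yi by simp
  next
    case False
    then have "(y i \<oplus>\<^bsub>C\<^esub> ((Dm (cinj C A (s \<odot>\<^bsub>C\<^esub> y B)))(B := \<zero>\<^bsub>C\<^esub>)) i)
        \<oplus>\<^bsub>C\<^esub> ((Dm (cinj C A (s' \<odot>\<^bsub>C\<^esub> y B)))(B := \<zero>\<^bsub>C\<^esub>)) i =
        y i \<oplus>\<^bsub>C\<^esub> (Dm (cinj C A (s \<odot>\<^bsub>C\<^esub> y B)) i \<oplus>\<^bsub>C\<^esub> Dm (cinj C A (s' \<odot>\<^bsub>C\<^esub> y B)) i)"
      using yi d1 by (simp add: M.a_assoc)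
    then show ?thesis using sum0 yi by simp
  qed
  finally show "Bm A B Dm s' (Bm A B Dm s y) i = y i" .
qed

lemma elim_i: assumes Dm: "lin (Suc A) (Suc B) Dm" and u: "u \<in> carrier R"
  and coef: "\<And>c. c \<in> carrier C \<Longrightarrow> Dm (cinj C A c) B = u \<odot>\<^bsub>C\<^esub> c"
  and w: "w \<in> carrier R" and uw: "u \<otimes>\<^bsub>R\<^esub> w = \<ominus>\<^bsub>R\<^esub> \<one>\<^bsub>R\<^esub>" and x: "x \<in> P (Suc A)"
  shows "Bm A B Dm w (Dm (Gm A B Dm w x)) B = u \<odot>\<^bsub>C\<^esub> x A"
proof -
  have t: "x(A := \<zero>\<^bsub>C\<^esub>) \<in> P (Suc A)" using P_mono[OF decomp(2)[OF x]] by simp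
  define r where "r = Dm (x(A := \<zero>\<^bsub>C\<^esub>)) B"
  have r: "r \<in> carrier C" unfolding r_def by (rule P_coord[OF linD1[OF Dm t]])
  have xA: "x A \<in> carrier C" by (rule P_coord[OF x])
  have wr: "w \<odot>\<^bsub>C\<^esub> r \<in> carrier C" using w r by simp
  have GP: "Gm A B Dm w x \<in> P (Suc A)" by (rule linD1[OF Gm_lin[OF Dm w] x])
  have "Bm A B Dm w (Dm (Gm A B Dm w x)) B = Dm (Gm A B Dm w x) B"
    by (rule Bm_B[OF linD1[OF Dm GP]])
  also have Geq: "Gm A B Dm w x = (\<lambda>i. x i \<oplus>\<^bsub>C\<^esub> cinj C A (w \<odot>\<^bsub>C\<^esub> r) i)" unfolding Gm_def r_def ..
  have "Dm (Gm A B Dm w x) B = Dm x B \<oplus>\<^bsub>C\<^esub> Dm (cinj C A (w \<odot>\<^bsub>C\<^esub> r)) B"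
    unfolding Geq by (rule padd_at[OF Dm x inj_P[OF wr]]) simp
  also have "Dm x B = r \<oplus>\<^bsub>C\<^esub> u \<odot>\<^bsub>C\<^esub> x A"
  proof -
    have "Dm x B = Dm (\<lambda>k. (x(A := \<zero>\<^bsub>C\<^esub>)) k \<oplus>\<^bsub>C\<^esub> cinj C A (x A) k) B"
      by (rule arg_cong[where f="\<lambda>y. Dm y B", OF decomp(1)[OF x]])
    also have "\<dots> = r \<oplus>\<^bsub>C\<^esub> Dm (cinj C A (x A)) B" unfolding r_def
      by (rule padd_at[OF Dm t inj_P[OF xA]]) simp
    finally show ?thesis using coef[OF xA] by simp
  qed
  also have "Dm (cinj C A (w \<odot>\<^bsub>C\<^esub> r)) B = (\<ominus>\<^bsub>R\<^esub> \<one>\<^bsub>R\<^esub>) \<odot>\<^bsub>C\<^esub> r"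
    using coef[OF wr] smult_assoc1[OF u w r] uw by simp
  also have "\<dots> = \<ominus>\<^bsub>C\<^esub> r" using r by (simp add: smult_l_minus)
  also have "(r \<oplus>\<^bsub>C\<^esub> u \<odot>\<^bsub>C\<^esub> x A) \<oplus>\<^bsub>C\<^esub> \<ominus>\<^bsub>C\<^esub> r = u \<odot>\<^bsub>C\<^esub> x A"
  proof -
    have b: "u \<odot>\<^bsub>C\<^esub> x A \<in> carrier C" using u xA by simp
    have "(r \<oplus>\<^bsub>C\<^esub> u \<odot>\<^bsub>C\<^esub> x A) \<oplus>\<^bsub>C\<^esub> \<ominus>\<^bsub>C\<^esub> r = \<ominus>\<^bsub>C\<^esub> r \<oplus>\<^bsub>C\<^esub> (r \<oplus>\<^bsub>C\<^esub> u \<odot>\<^bsub>C\<^esub> x A)"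
      using r b by (simp only: M.a_comm[of "r \<oplus>\<^bsub>C\<^esub> u \<odot>\<^bsub>C\<^esub> x A" "\<ominus>\<^bsub>C\<^esub> r"] M.a_closed M.add.inv_closed)
    also have "\<dots> = (\<ominus>\<^bsub>C\<^esub> r \<oplus>\<^bsub>C\<^esub> r) \<oplus>\<^bsub>C\<^esub> u \<odot>\<^bsub>C\<^esub> x A"
      using r b by (simp only: M.a_assoc M.add.inv_closed)
    also have "\<dots> = u \<odot>\<^bsub>C\<^esub> x A" using r b by (simp add: M.l_neg)
    finally show ?thesis .
  qed
  finally show ?thesis .
qed

lemma elim_ii: assumes Dm: "lin (Suc A) (Suc B) Dm" and u: "u \<in> carrier R"
  and coef: "\<And>c. c \<in> carrier C \<Longrightarrow> Dm (cinj C A c) B = u \<odot>\<^bsub>C\<^esub> c"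
  and w: "w \<in> carrier R" and wu: "w \<otimes>\<^bsub>R\<^esub> u = \<ominus>\<^bsub>R\<^esub> \<one>\<^bsub>R\<^esub>" and c: "c \<in> carrier C"
  shows "Bm A B Dm w (Dm (Gm A B Dm w (cinj C A c))) = cinj C B (u \<odot>\<^bsub>C\<^esub> c)"
proof -
  have tr0: "(cinj C A c)(A := \<zero>\<^bsub>C\<^esub>) = (\<lambda>i. \<zero>\<^bsub>C\<^esub>)" by (auto simp: cinj_def)
  have cP: "cinj C A c \<in> P (Suc A)" using inj_P[OF c] by simp
  have G: "Gm A B Dm w (cinj C A c) = cinj C A c"
  proof
    fix i
    show "Gm A B Dm w (cinj C A c) i = cinj C A c i"
      unfolding Gm_def tr0 lin_zero[OF Dm] using w c P_coord[OF cP, of i] by (simp add: cinj_def)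
  qed
  define v where "v = Dm (cinj C A c)"
  have vP: "v \<in> P (Suc B)" unfolding v_def by (rule linD1[OF Dm cP])
  have vB: "v B = u \<odot>\<^bsub>C\<^esub> c" unfolding v_def by (rule coef[OF c])
  have wuc: "w \<odot>\<^bsub>C\<^esub> (u \<odot>\<^bsub>C\<^esub> c) = \<ominus>\<^bsub>C\<^esub> c"
    using smult_assoc1[OF w u c, symmetric] wu c by (simp add: smult_l_minus)
  have m0: "\<ominus>\<^bsub>C\<^esub> \<zero>\<^bsub>C\<^esub> = \<zero>\<^bsub>C\<^esub>" by (rule M.minus_equality) simp_all
  have ncinj: "cinj C A (\<ominus>\<^bsub>C\<^esub> c) = (\<lambda>i. \<ominus>\<^bsub>C\<^esub> cinj C A c i)" unfolding cinj_def by (intro ext) (simp add: m0)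
  have Dn: "Dm (cinj C A (\<ominus>\<^bsub>C\<^esub> c)) = (\<lambda>i. \<ominus>\<^bsub>C\<^esub> v i)"
    unfolding ncinj v_def by (rule lin_neg[OF Dm cP])
  show ?thesis
  proof
    fix i
    have vi: "v i \<in> carrier C" by (rule P_coord[OF vP])
    have "Bm A B Dm w (Dm (Gm A B Dm w (cinj C A c))) i = v i \<oplus>\<^bsub>C\<^esub> ((\<lambda>i. \<ominus>\<^bsub>C\<^esub> v i)(B := \<zero>\<^bsub>C\<^esub>)) i"
      unfolding G Bm_def v_def[symmetric] vB wuc Dn ..
    also have "\<dots> = cinj C B (u \<odot>\<^bsub>C\<^esub> c) i"
      using vi vB by (cases "i = B") (simp_all add: cinj_def M.r_neg P_iff)
    finally show "Bm A B Dm w (Dm (Gm A B Dm w (cinj C A c))) i = cinj C B (u \<odot>\<^bsub>C\<^esub> c) i" .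
  qed
qed

lemma reduce:
  assumes res: "pow_resolution R C M a d e" and Mg: "abelian_group M" and n: "n \<ge> 1"
    and ij: "i < a n" "j < a (n - 1)" and F: "F \<in> carrier R" "F \<notin> m"
    and Fc: "\<And>c. c \<in> carrier C \<Longrightarrow> d n (cinj C i c) j = F \<odot>\<^bsub>C\<^esub> c"
  shows "\<exists>d' e'. pow_resolution R C M (a(n := a n - 1, n - 1 := a (n - 1) - 1)) d' e'"
proof -
  obtain A where aA: "a n = Suc A" using ij(1) by (cases "a n") auto
  obtain B where aB: "a (n - 1) = Suc B" using ij(2) by (cases "a (n - 1)") auto
  have nn: "n \<noteq> n - 1" using n by simp
  define \<alpha>1 where "\<alpha>1 = (\<lambda>k. if k = n then sw i A else if k = n - 1 then sw j B else (\<lambda>x::nat \<Rightarrow> 'c. x))"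
  define d1 where "d1 = (\<lambda>k x. \<alpha>1 (k - 1) (d k (\<alpha>1 k x)))"
  define e1 where "e1 = (\<lambda>x. e (\<alpha>1 0 x))"
  have res1: "pow_resolution R C M a d1 e1"
    unfolding d1_def e1_def \<alpha>1_def by (rule swap_res[OF res n aA aB ij])
  have d1n: "\<And>x. d1 n x = sw j B (d n (sw i A x))" unfolding d1_def \<alpha>1_def using nn by simp
  have ld1: "lin (Suc A) (Suc B) (d1 n)"
    using conjunct1[OF res1[unfolded res_iff]] n aA aB by auto
  have coef: "\<And>c. c \<in> carrier C \<Longrightarrow> d1 n (cinj C A c) B = F \<odot>\<^bsub>C\<^esub> c"
  proof -
    fix c assume c: "c \<in> carrier C"
    have "d1 n (cinj C A c) B = d n (cinj C i c) j" unfolding d1n sw_cinj by (simp add: sw_def)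
    then show "d1 n (cinj C A c) B = F \<odot>\<^bsub>C\<^esub> c" using Fc[OF c] by simp
  qed
  have uU: "F \<in> Units R" using units_m F by blast
  define ui where "ui = inv\<^bsub>R\<^esub> F"
  have ui: "ui \<in> carrier R" "F \<otimes>\<^bsub>R\<^esub> ui = \<one>\<^bsub>R\<^esub>" "ui \<otimes>\<^bsub>R\<^esub> F = \<one>\<^bsub>R\<^esub>"
    using uU unfolding ui_def by auto
  define w where "w = \<ominus>\<^bsub>R\<^esub> ui"
  have w: "w \<in> carrier R" unfolding w_def using ui by simp
  have uw: "F \<otimes>\<^bsub>R\<^esub> w = \<ominus>\<^bsub>R\<^esub> \<one>\<^bsub>R\<^esub>" unfolding w_def using ui F by (simp add: R.r_minus)
  have wu: "w \<otimes>\<^bsub>R\<^esub> F = \<ominus>\<^bsub>R\<^esub> \<one>\<^bsub>R\<^esub>" unfolding w_def using ui F by (simp add: R.l_minus)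
  have s1: "w \<oplus>\<^bsub>R\<^esub> ui = \<zero>\<^bsub>R\<^esub>" unfolding w_def using ui by (simp add: R.l_neg)
  have s2: "ui \<oplus>\<^bsub>R\<^esub> w = \<zero>\<^bsub>R\<^esub>" unfolding w_def using ui by (simp add: R.r_neg)
  define f1 where "f1 = Gm A B (d1 n) ui"
  define g1 where "g1 = Gm A B (d1 n) w"
  define f2 where "f2 = Bm A B (d1 n) w"
  define g2 where "g2 = Bm A B (d1 n) ui"
  define \<alpha>2 where "\<alpha>2 = (\<lambda>k. if k = n then f1 else if k = n - 1 then f2 else (\<lambda>x::nat \<Rightarrow> 'c. x))"
  define \<beta>2 where "\<beta>2 = (\<lambda>k. if k = n then g1 else if k = n - 1 then g2 else (\<lambda>x::nat \<Rightarrow> 'c. x))"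
  have I: "iso_fam a \<alpha>2 \<beta>2" unfolding \<alpha>2_def \<beta>2_def
  proof (rule iso_two[OF nn])
    show "lin (a n) (a n) f1" unfolding f1_def aA by (rule Gm_lin[OF ld1 ui(1)])
    show "lin (a n) (a n) g1" unfolding g1_def aA by (rule Gm_lin[OF ld1 w])
    show "lin (a (n - 1)) (a (n - 1)) f2" unfolding f2_def aB by (rule Bm_lin[OF ld1 w])
    show "lin (a (n - 1)) (a (n - 1)) g2" unfolding g2_def aB by (rule Bm_lin[OF ld1 ui(1)])
    fix x
    show "x \<in> P (a n) \<Longrightarrow> g1 (f1 x) = x" unfolding f1_def g1_def aA by (rule Gm_inv[OF ld1 ui(1) w s1])
    show "x \<in> P (a n) \<Longrightarrow> f1 (g1 x) = x" unfolding f1_def g1_def aA by (rule Gm_inv[OF ld1 w ui(1) s2])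
    show "x \<in> P (a (n - 1)) \<Longrightarrow> g2 (f2 x) = x" unfolding f2_def g2_def aB by (rule Bm_inv[OF ld1 w ui(1) s2])
    show "x \<in> P (a (n - 1)) \<Longrightarrow> f2 (g2 x) = x" unfolding f2_def g2_def aB by (rule Bm_inv[OF ld1 ui(1) w s1])
  qed
  define d2 where "d2 = (\<lambda>k x. \<alpha>2 (k - 1) (d1 k (\<beta>2 k x)))"
  define e2 where "e2 = (\<lambda>x. e1 (\<beta>2 0 x))"
  have res2: "pow_resolution R C M a d2 e2" unfolding d2_def e2_def by (rule conj_res[OF res1 I])
  have d2n: "\<And>x. d2 n x = Bm A B (d1 n) w (d1 n (Gm A B (d1 n) w x))"
    unfolding d2_def \<alpha>2_def \<beta>2_def f2_def g1_def using nn by simp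
  have "pow_resolution R C M (a(n := A, n - 1 := B)) d2 e2"
  proof (rule trunc_res[OF res2 Mg n aA aB F])
    fix x assume "x \<in> P (Suc A)"
    then show "d2 n x B = F \<odot>\<^bsub>C\<^esub> x A" unfolding d2n
      by (intro elim_i[of A B "d1 n" F w x] ld1 F(1) coef w uw)
  next
    fix c assume "c \<in> carrier C"
    then show "d2 n (cinj C A c) = cinj C B (F \<odot>\<^bsub>C\<^esub> c)" unfolding d2n
      by (intro elim_ii[of A B "d1 n" F w c] ld1 F(1) coef w wu)
  qed
  then show ?thesis using aA aB by auto
qed

lemma exists_minimal:
  assumes Mg: "abelian_group M"
  shows "pow_resolution R C M a d e \<Longrightarrow> (\<forall>k\<ge>N. a k = 0) \<Longrightarrow>
    \<exists>a d e. pow_resolution R C M a d e \<and> minimal_cx R C a d"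
proof (induction "\<Sum>k<N. a k" arbitrary: a d e rule: less_induct)
  case less
  have res: "pow_resolution R C M a d e" by fact
  have tail: "\<forall>k\<ge>N. a k = 0" by fact
  have ld: "\<And>n. n \<ge> 1 \<Longrightarrow> lin (a n) (a (n - 1)) (d n)" using conjunct1[OF res[unfolded res_iff]] by simp
  show ?case
  proof (cases "\<forall>n\<ge>1. small (a n) (a (n - 1)) (d n)")
    case True
    have "minimal_cx R C a d" by (rule minimal_of_small[of a d, OF ld]) (use True in simp_all)
    then show ?thesis using res by blast
  next
    case False
    then obtain n where n: "n \<ge> 1" and ns: "\<not> small (a n) (a (n - 1)) (d n)" by blast
    then obtain i j F where ij: "i < a n" "j < a (n - 1)" and F: "F \<in> carrier R"
      and Fc: "\<forall>c\<in>carrier C. d n (cinj C i c) j = F \<odot>\<^bsub>C\<^esub> c" and Fm: "F \<notin> m"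
      unfolding small_def by blast
    obtain d' e' where res': "pow_resolution R C M (a(n := a n - 1, n - 1 := a (n - 1) - 1)) d' e'"
      using reduce[OF res Mg n ij F Fm] Fc by blast
    define a' where "a' = a(n := a n - 1, n - 1 := a (n - 1) - 1)"
    have le: "\<And>k. a' k \<le> a k" unfolding a'_def by simp
    have tail': "\<forall>k\<ge>N. a' k = 0" using tail le by (metis le_zero_eq)
    have nN: "n < N"
    proof (rule ccontr)
      assume "\<not> n < N"
      then have "a n = 0" using tail by simp
      then show False using ij by simp
    qed
    have lt: "a' n < a n" unfolding a'_def using n ij by simp
    have "(\<Sum>k<N. a' k) < (\<Sum>k<N. a k)"
      by (rule sum_strict_mono_ex1) (use le lt nN in auto)
    then show ?thesis using less.hyps[of a' d' e'] res' tail' unfolding a'_def by blast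
  qed
qed

lemma C_nontriv: "\<exists>c\<in>carrier C. c \<noteq> \<zero>\<^bsub>C\<^esub>"
proof (rule ccontr)
  assume "\<not> (\<exists>c\<in>carrier C. c \<noteq> \<zero>\<^bsub>C\<^esub>)"
  then have all0: "\<And>c. c \<in> carrier C \<Longrightarrow> c = \<zero>\<^bsub>C\<^esub>" by blast
  have "lin_map R C C (\<lambda>x. x)" unfolding lin_map_def by simp
  then have "\<exists>!r. r \<in> carrier R \<and> (\<forall>c\<in>carrier C. c = r \<odot>\<^bsub>C\<^esub> c)" by (rule homoE)
  then obtain r0 where uq: "\<forall>y. y \<in> carrier R \<and> (\<forall>c\<in>carrier C. c = y \<odot>\<^bsub>C\<^esub> c) \<longrightarrow> y = r0"
    unfolding Ex1_def by blast
  have "\<zero>\<^bsub>R\<^esub> \<in> carrier R \<and> (\<forall>c\<in>carrier C. c = \<zero>\<^bsub>R\<^esub> \<odot>\<^bsub>C\<^esub> c)" using all0 by simp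
  then have "\<zero>\<^bsub>R\<^esub> = r0" using uq by blast
  moreover have "\<one>\<^bsub>R\<^esub> \<in> carrier R \<and> (\<forall>c\<in>carrier C. c = \<one>\<^bsub>R\<^esub> \<odot>\<^bsub>C\<^esub> c)" by simp
  then have "\<one>\<^bsub>R\<^esub> = r0" using uq by blast
  ultimately have "\<zero>\<^bsub>R\<^esub> = \<one>\<^bsub>R\<^esub>" by simp
  then show False using m_zero one_notin by simp
qed

end
theorem lemma4p9:
  fixes R :: "'a ring" and C :: "('a, 'c) module" and M :: "('a, 'm) module"
  assumes "cring R" and "noetherian_ring R" and "local_ring R"
    and "semidualizing R C"
    and "module R M" and "fin_gen R M"
    and "\<exists>a d e. PCf_resolution R C M a d e \<and> bounded_cx C a"
  shows "\<exists>a d e. PCf_resolution R C M a d e \<and> minimal_cx R C a d"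
proof -
  obtain a d e where res: "pow_resolution R C M a d e" and bd: "bounded_cx C a" using assms(7) by blast
  have ex1: "\<exists>!I. maximalideal I R" using assms(3) unfolding local_ring_def by simp
  then obtain mI where mI: "maximalideal mI R" and uq0: "\<forall>I. maximalideal I R \<longrightarrow> I = mI"
    unfolding Ex1_def by blast
  have uq: "\<And>I. maximalideal I R \<Longrightarrow> I = mI" using uq0 by blast
  have idl: "ideal mI R" using mI by (rule maximalideal.axioms(1))
  have one: "\<one>\<^bsub>R\<^esub> \<notin> mI"
  proof
    assume "\<one>\<^bsub>R\<^esub> \<in> mI"
    then have "mI = carrier R" by (rule ideal.one_imp_carrier[OF idl])
    then show False using maximalideal.I_notcarr[OF mI] by simp
  qed
  have units: "\<And>x. x \<in> carrier R \<Longrightarrow> x \<notin> mI \<Longrightarrow> x \<in> Units R"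
    using local_units[OF assms(1) mI uq] by blast
  have modC: "module R C" and hom: "homothety_iso R C" using assms(4) unfolding semidualizing_def by auto
  interpret L: lctx R C mI
    by (rule lctx.intro[OF modC], rule lctx_axioms.intro[OF idl one units hom])
  have Mg: "abelian_group M" using assms(5) by (rule module.axioms(2))
  obtain N where N: "\<forall>n\<ge>N. carrier (pow_mod C (a n)) = {\<zero>\<^bsub>pow_mod C (a n)\<^esub>}"
    using bd unfolding bounded_cx_def by blast
  obtain c where c: "c \<in> carrier C" "c \<noteq> \<zero>\<^bsub>C\<^esub>" using L.C_nontriv by blast
  have tail: "\<forall>k\<ge>N. a k = 0"
  proof (intro allI impI)
    fix k assume k: "N \<le> k"
    show "a k = 0"
    proof (rule ccontr)
      assume "a k \<noteq> 0"
      then have "cinj C 0 c \<in> carrier (pow_mod C (a k))" using L.inj_P[OF c(1)] by simp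
      then have "cinj C 0 c = (\<lambda>i. \<zero>\<^bsub>C\<^esub>)" using N k unfolding pm_zero by blast
      then have "cinj C 0 c 0 = \<zero>\<^bsub>C\<^esub>" by simp
      then show False using c(2) unfolding cinj_def by simp
    qed
  qed
  show ?thesis by (rule L.exists_minimal[OF Mg res tail])
qed

end
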